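(* Let $n\ge2$, let $\Omega\subset\mathbb{R}^n$ be a bounded domain with $C^{2+\alpha}$ boundary, $(d_1,d_2,f,\kappa)\in(0,\infty)^4$, and $\varphi\in C_0^\infty(\mathbb{R}^n)$ non-negative, radially symmetric, with support in $B_1(0)$ and non-increasing radial profile. For $j\ge1$ let $\chi_j(x,y):=j^{n+2}\varphi(j(x-y))$, $\Gamma_{\chi_j}z(x):=\int_\Omega\chi_j(x,y)(z(y)-z(x))\,\mathrm{d}y$, and $Y_j[z]:=\int_{\Omega\times\Omega}\chi_j(x,y)[z(x)-z(y)]^2\,\mathrm{d}(x,y)$ for $z\in L_2(\Omega)$. Fix non-negative $(u^0,v^0)\in L_\infty(\Omega)^2$ and let $(u_j,v_j)\in C^1([0,\infty),L_\infty(\Omega)^2)$ be the non-negative solution to $$\partial_t u_j=d_1\Gamma_{\chi_j}u_j-u_jv_j^2+f(1-u_j),\quad \partial_t v_j=d_2\Gamma_{\chi_j}v_j+u_jv_j^2-(f+\kappa)v_j,\quad (u_j,v_j)(0)=(u^0,v^0).$$ Then there is $C_1>0$ depending only on $n,\Omega,d_1,d_2,\varphi,f,\kappa,(u^0,v^0)$ such that for all $t>0$ and $j\ge1$, $$\|u_j(t)\|_2^2+\|v_j(t)\|_2^2\le C_1,\qquad \int_0^t\big(Y_j[u_j(s)]+Y_j[v_j(s)]+\|(u_jv_j)(s)\|_2^2\big)\,\mathrm{d}s\le C_1(1+t).$$ *)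

theory Defs
  imports "HOL-Analysis.Analysis" "HOL-Probability.Essential_Supremum"
begin

text \<open>P xs is the partial derivative along the coordinate directions in xs
  (the head of the list being the outermost derivative).\<close>
definition smooth_fun :: "(real^'n \<Rightarrow> real) \<Rightarrow> bool" where
  "smooth_fun g \<longleftrightarrow> (\<exists>P :: 'n list \<Rightarrow> real^'n \<Rightarrow> real.
      P [] = g \<and> (\<forall>is. continuous_on UNIV (P is)) \<and>
      (\<forall>is i x. ((\<lambda>t. P is (x + t *\<^sub>R axis i 1)) has_real_derivative P (i # is) x) (at 0)))"

text \<open>C^{2+alpha} boundary, via local defining functions: near every boundary point p
  the domain is the sublevel set rho < 0 of a C^{2,alpha} function rho with nonvanishing
  gradient g and Hessian H which is alpha-Hoelder continuous.\<close>
definition C2alpha_boundary :: "(real^'n) set \<Rightarrow> real \<Rightarrow> bool" where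
  "C2alpha_boundary \<Omega> \<alpha> \<longleftrightarrow> (\<forall>p\<in>frontier \<Omega>. \<exists>r>0. \<exists>(\<rho>::real^'n \<Rightarrow> real) g H (L::real).
      (\<forall>x\<in>ball p r. (\<rho> has_derivative (\<lambda>h. g x \<bullet> h)) (at x) \<and>
                     (g has_derivative (\<lambda>h. (H x :: real^'n^'n) *v h)) (at x) \<and> g x \<noteq> 0) \<and>
      (\<forall>x\<in>ball p r. \<forall>y\<in>ball p r. \<forall>i k. \<bar>H x $ i $ k - H y $ i $ k\<bar> \<le> L * dist x y powr \<alpha>) \<and>
      \<Omega> \<inter> ball p r = {x\<in>ball p r. \<rho> x < 0})"

definition Linf_norm :: "(real^'n) set \<Rightarrow> (real^'n \<Rightarrow> real) \<Rightarrow> ereal" where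
  "Linf_norm \<Omega> z = esssup (restrict_space lebesgue \<Omega>) (\<lambda>x. ereal \<bar>z x\<bar>)"

definition Linf :: "(real^'n) set \<Rightarrow> (real^'n \<Rightarrow> real) set" where
  "Linf \<Omega> = {z. z \<in> borel_measurable (restrict_space lebesgue \<Omega>) \<and> Linf_norm \<Omega> z < \<infinity>}"

definition Linf_C1 :: "(real^'n) set \<Rightarrow> (real \<Rightarrow> real^'n \<Rightarrow> real) \<Rightarrow> (real \<Rightarrow> real^'n \<Rightarrow> real) \<Rightarrow> bool" where
  "Linf_C1 \<Omega> u u' \<longleftrightarrow>
     (\<forall>t\<ge>0. u t \<in> Linf \<Omega> \<and> u' t \<in> Linf \<Omega>) \<and>
     (\<forall>t\<ge>0. ((\<lambda>h. Linf_norm \<Omega> (\<lambda>x. (u (t + h) x - u t x) / h - u' t x)) \<longlongrightarrow> 0)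
               (at 0 within {-t..})) \<and>
     (\<forall>t\<ge>0. ((\<lambda>s. Linf_norm \<Omega> (\<lambda>x. u' s x - u' t x)) \<longlongrightarrow> 0) (at t within {0..}))"

definition kernel :: "(real^'n \<Rightarrow> real) \<Rightarrow> nat \<Rightarrow> real^'n \<Rightarrow> real^'n \<Rightarrow> real" where
  "kernel \<phi> j x y = real j ^ (CARD('n) + 2) * \<phi> (real j *\<^sub>R (x - y))"

definition Gamma :: "(real^'n) set \<Rightarrow> (real^'n \<Rightarrow> real) \<Rightarrow> nat \<Rightarrow> (real^'n \<Rightarrow> real) \<Rightarrow> real^'n \<Rightarrow> real" where
  "Gamma \<Omega> \<phi> j z x = (LINT y:\<Omega>|lebesgue. kernel \<phi> j x y * (z y - z x))"

definition Yfun :: "(real^'n) set \<Rightarrow> (real^'n \<Rightarrow> real) \<Rightarrow> nat \<Rightarrow> (real^'n \<Rightarrow> real) \<Rightarrow> ennreal" where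
  "Yfun \<Omega> \<phi> j z = (\<integral>\<^sup>+ p\<in>\<Omega> \<times> \<Omega>. ennreal (kernel \<phi> j (fst p) (snd p) * (z (fst p) - z (snd p))^2)
                       \<partial>(lebesgue \<Otimes>\<^sub>M lebesgue))"

definition L2sq :: "(real^'n) set \<Rightarrow> (real^'n \<Rightarrow> real) \<Rightarrow> ennreal" where
  "L2sq \<Omega> z = (\<integral>\<^sup>+ x\<in>\<Omega>. ennreal ((z x)^2) \<partial>lebesgue)"

definition is_solution :: "(real^'n) set \<Rightarrow> (real^'n \<Rightarrow> real) \<Rightarrow> real \<Rightarrow> real \<Rightarrow> real \<Rightarrow> real \<Rightarrow>
    (real^'n \<Rightarrow> real) \<Rightarrow> (real^'n \<Rightarrow> real) \<Rightarrow> nat \<Rightarrow>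
    (real \<Rightarrow> real^'n \<Rightarrow> real) \<Rightarrow> (real \<Rightarrow> real^'n \<Rightarrow> real) \<Rightarrow> bool" where
  "is_solution \<Omega> \<phi> d1 d2 f \<kappa> u0 v0 j u v \<longleftrightarrow>
     (\<exists>u' v'. Linf_C1 \<Omega> u u' \<and> Linf_C1 \<Omega> v v' \<and>
        (\<forall>t\<ge>0. AE x\<in>\<Omega> in lebesgue. u t x \<ge> 0 \<and> v t x \<ge> 0) \<and>
        (\<forall>t\<ge>0. AE x\<in>\<Omega> in lebesgue.
            u' t x = d1 * Gamma \<Omega> \<phi> j (u t) x - u t x * (v t x)^2 + f * (1 - u t x)) \<and>
        (\<forall>t\<ge>0. AE x\<in>\<Omega> in lebesgue.
            v' t x = d2 * Gamma \<Omega> \<phi> j (v t) x + u t x * (v t x)^2 - (f + \<kappa>) * v t x) \<and>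
        (AE x\<in>\<Omega> in lebesgue. u 0 x = u0 x \<and> v 0 x = v0 x))"

end

theory Submission
  imports Defs
begin

lemma sf_leb: "sigma_finite_measure (lebesgue :: ('a::euclidean_space) measure)"
  unfolding sigma_finite_measure_def
proof (intro exI[of _ "range (\<lambda>n::nat. cball (0::'a) (real n))"] conjI)
  show "countable (range (\<lambda>n::nat. cball (0::'a) (real n)))" by simp
  show "range (\<lambda>n::nat. cball (0::'a) (real n)) \<subseteq> sets lebesgue" by auto
  show "\<Union> (range (\<lambda>n::nat. cball (0::'a) (real n))) = space lebesgue"
  proof -
    have "x \<in> (\<Union>n. cball (0::'a) (real n))" for x
      using real_arch_simple[of "norm x"] by (auto simp: dist_norm)
    then show ?thesis by auto
  qed
  show "\<forall>a\<in>range (\<lambda>n::nat. cball (0::'a) (real n)). emeasure lebesgue a \<noteq> \<infinity>"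
  proof (rule ballI)
    fix a assume "a \<in> range (\<lambda>n::nat. cball (0::'a) (real n))"
    then obtain n::nat where a: "a = cball 0 (real n)" by auto
    have "emeasure lborel (cball (0::'a) (real n)) < \<infinity>"
      by (rule emeasure_bounded_finite) simp
    then show "emeasure lebesgue a \<noteq> \<infinity>" using a by simp
  qed
qed

interpretation LL: pair_sigma_finite "lebesgue :: ('a::euclidean_space) measure" "lebesgue :: 'a measure"
  by (simp add: pair_sigma_finite_def sf_leb)

lemma meas_restrict_ext:
  fixes z :: "'a::euclidean_space \<Rightarrow> real"
  assumes "S \<in> sets lebesgue" "z \<in> borel_measurable (lebesgue_on S)"
  shows "(\<lambda>x. indicator S x * z x) \<in> borel_measurable lebesgue"
  using assms borel_measurable_restrict_space_iff[of S lebesgue z] by auto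


lemma ftc0:
  fixes F F' :: "real \<Rightarrow> real"
  assumes deriv: "\<And>s. s \<ge> 0 \<Longrightarrow> (F has_real_derivative F' s) (at s within {0..})"
    and "t \<ge> 0"
  shows "(F' has_integral (F t - F 0)) {0..t}"
proof (rule fundamental_theorem_of_calculus[OF \<open>t \<ge> 0\<close>])
  fix x :: real assume "x \<in> {0..t}"
  then have "(F has_real_derivative F' x) (at x within {0..})" using deriv by auto
  then have "(F has_real_derivative F' x) (at x within {0..t})"
    by (rule DERIV_subset) auto
  then show "(F has_vector_derivative F' x) (at x within {0..t})"
    by (simp add: has_real_derivative_iff_has_vector_derivative)
qed

lemma ode_bound:
  fixes F F' D :: "real \<Rightarrow> real" and f C0 c t :: real
  assumes f: "f > 0" and c: "c > 0"
  and deriv: "\<And>s. s \<ge> 0 \<Longrightarrow> (F has_real_derivative F' s) (at s within {0..})"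
  and Fnn: "\<And>s. s \<ge> 0 \<Longrightarrow> F s \<ge> 0"
  and Dnn: "\<And>s. s \<ge> 0 \<Longrightarrow> D s \<ge> 0"
  and ineq: "\<And>s. s \<ge> 0 \<Longrightarrow> F' s \<le> - c * D s - f * F s + C0"
  and t: "t \<ge> 0"
  shows "F t \<le> max (F 0) (C0 / f)"
    and "(\<integral>\<^sup>+ s\<in>{0..t}. ennreal (D s) \<partial>lborel) \<le> ennreal ((F 0 + C0 * t) / c)"
proof -
  define G where "G s = exp (f * s) * (F s - C0 / f)" for s
  define G' where "G' s = exp (f * s) * (f * (F s - C0 / f) + F' s)" for s
  have dG: "(G has_real_derivative G' s) (at s within {0..})" if "s \<ge> 0" for s
    unfolding G_def G'_def
    by (auto intro!: derivative_eq_intros deriv that simp: algebra_simps)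
  have G'le: "G' s \<le> 0" if "s \<ge> 0" for s
  proof -
    have "f * (F s - C0 / f) + F' s \<le> - c * D s"
      using ineq[OF that] f by (simp add: algebra_simps)
    also have "\<dots> \<le> 0" using Dnn[OF that] c by simp
    finally show ?thesis unfolding G'_def by (simp add: mult_nonneg_nonpos)
  qed
  have "(G' has_integral (G t - G 0)) {0..t}" by (rule ftc0[OF dG t]) auto
  then have "G t - G 0 \<le> 0"
    using has_integral_le[of G' "G t - G 0" "{0..t}" "\<lambda>_. 0" 0] G'le by auto
  then have Gt: "exp (f * t) * (F t - C0 / f) \<le> F 0 - C0 / f" unfolding G_def by simp
  show "F t \<le> max (F 0) (C0 / f)"
  proof (cases "F t - C0 / f \<le> 0")
    case True then show ?thesis by simp
  next
    case False
    have "1 \<le> exp (f * t)" using f t by simp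
    then have "F t - C0 / f \<le> exp (f * t) * (F t - C0 / f)"
      using False by (simp add: mult_le_cancel_right1)
    with Gt show ?thesis by simp
  qed
next
  define H where "H s = - F' s - f * F s + C0" for s
  have iF': "(F' has_integral (F t - F 0)) {0..t}" by (rule ftc0[OF deriv t])
  have contF: "continuous_on {0..t} F"
  proof (rule continuous_on_eq_continuous_within[THEN iffD2], rule ballI)
    fix x assume "x \<in> {0..t}"
    then have "(F has_real_derivative F' x) (at x within {0..})" using deriv by auto
    then have "(F has_real_derivative F' x) (at x within {0..t})"
      by (rule DERIV_subset) auto
    then show "continuous (at x within {0..t}) F" by (rule DERIV_continuous)
  qed
  have "F integrable_on {0..t}" by (rule integrable_continuous_interval[OF contF])
  then have iF: "(F has_integral integral {0..t} F) {0..t}" by (simp add: has_integral_integral)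
  have IFnn: "0 \<le> integral {0..t} F"
    using has_integral_le[OF has_integral_0 iF] Fnn by auto
  have iH: "(H has_integral (- (F t - F 0) - f * integral {0..t} F + C0 * t)) {0..t}"
  proof -
    have "((\<lambda>s. C0) has_integral C0 * t) {0..t}"
      using has_integral_const_real[of C0 0 t] t by (simp add: mult.commute)
    then show ?thesis unfolding H_def
      by (intro has_integral_add has_integral_diff has_integral_neg has_integral_mult_right iF' iF)
  qed
  have Hnn: "0 \<le> H s" if "s \<in> {0..t}" for s
  proof -
    have "c * D s \<le> H s" using ineq[of s] that unfolding H_def by auto
    moreover have "0 \<le> c * D s" using Dnn[of s] that c by simp
    ultimately show ?thesis by linarith
  qed
  have "(\<integral>\<^sup>+ s\<in>{0..t}. ennreal (D s) \<partial>lborel) \<le> (\<integral>\<^sup>+ s. ennreal (H s / c) * indicator {0..t} s \<partial>lborel)"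
  proof (rule nn_integral_mono)
    fix s
    show "ennreal (D s) * indicator {0..t} s \<le> ennreal (H s / c) * indicator {0..t} s"
    proof (cases "s \<in> {0..t}")
      case True
      have "c * D s \<le> H s" using ineq[of s] True unfolding H_def by auto
      then have "D s \<le> H s / c" using c by (simp add: field_simps)
      then show ?thesis using True by (simp add: ennreal_leI)
    qed simp
  qed
  also have "\<dots> = ennreal ((- (F t - F 0) - f * integral {0..t} F + C0 * t) / c)"
    by (rule nn_integral_has_integral_lebesgue') (use Hnn c has_integral_divide[OF iH, of c] in auto)
  also have "\<dots> \<le> ennreal ((F 0 + C0 * t) / c)"
  proof (rule ennreal_leI, rule divide_right_mono)
    show "- (F t - F 0) - f * integral {0..t} F + C0 * t \<le> F 0 + C0 * t"
      using Fnn[OF t] IFnn f by (simp add: algebra_simps)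
  qed (use c in simp)
  finally show "(\<integral>\<^sup>+ s\<in>{0..t}. ennreal (D s) \<partial>lborel) \<le> ennreal ((F 0 + C0 * t) / c)" .
qed


lemma fm_on:
  assumes "\<Omega> \<in> sets lebesgue" "emeasure lebesgue \<Omega> < \<infinity>"
  shows "finite_measure (lebesgue_on \<Omega>)"
  by (rule finite_measureI) (use assms in \<open>simp add: space_restrict_space emeasure_restrict_space\<close>)

lemma space_on: "\<Omega> \<in> sets lebesgue \<Longrightarrow> space (lebesgue_on \<Omega>) = \<Omega>"
  by (simp add: space_restrict_space)

lemma measure_on: "\<Omega> \<in> sets lebesgue \<Longrightarrow> measure (lebesgue_on \<Omega>) \<Omega> = measure lebesgue \<Omega>"
  by (simp add: measure_restrict_space)

lemma Linf_AE:
  assumes "Linf_norm \<Omega> g \<le> ereal B"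
  shows "AE x in lebesgue_on \<Omega>. \<bar>g x\<bar> \<le> B"
proof -
  have "AE x in lebesgue_on \<Omega>. ereal \<bar>g x\<bar> \<le> Linf_norm \<Omega> g"
    unfolding Linf_norm_def by (rule esssup_AE)
  then show ?thesis by eventually_elim (use assms in \<open>metis ereal_less_eq(3) order.trans\<close>)
qed

lemma Linf_ex:
  assumes "g \<in> Linf \<Omega>"
  shows "\<exists>B\<ge>0. AE x in lebesgue_on \<Omega>. \<bar>g x\<bar> \<le> B"
proof -
  have "Linf_norm \<Omega> g < \<infinity>" using assms by (simp add: Linf_def)
  then obtain B where "Linf_norm \<Omega> g \<le> ereal B" "B \<ge> 0"
  proof (cases "Linf_norm \<Omega> g")
    case (real r)
    then show ?thesis by (intro that[of "max r 0"]) auto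
  qed (auto intro: that[of 0])
  then show ?thesis using Linf_AE by blast
qed

lemma Linf_meas: "g \<in> Linf \<Omega> \<Longrightarrow> g \<in> borel_measurable (lebesgue_on \<Omega>)"
  by (simp add: Linf_def)

lemma int_bound:
  assumes \<Omega>: "\<Omega> \<in> sets lebesgue" "emeasure lebesgue \<Omega> < \<infinity>"
    and h: "h \<in> borel_measurable (lebesgue_on \<Omega>)" "AE x in lebesgue_on \<Omega>. \<bar>h x\<bar> \<le> B"
  shows "\<bar>\<integral>x. h x \<partial>lebesgue_on \<Omega>\<bar> \<le> B * measure lebesgue \<Omega>"
proof -
  interpret finite_measure "lebesgue_on \<Omega>" by (rule fm_on[OF \<Omega>])
  have ih: "integrable (lebesgue_on \<Omega>) h"
    by (rule integrable_const_bound[where B=B]) (use h in auto)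
  have "\<bar>\<integral>x. h x \<partial>lebesgue_on \<Omega>\<bar> \<le> (\<integral>x. \<bar>h x\<bar> \<partial>lebesgue_on \<Omega>)"
    by (rule integral_abs_bound)
  also have "\<dots> \<le> (\<integral>x. B \<partial>lebesgue_on \<Omega>)"
    by (rule integral_mono_AE) (use ih h in auto)
  also have "\<dots> = B * measure lebesgue \<Omega>"
    using \<Omega> by (simp add: space_on measure_on)
  finally show ?thesis .
qed

lemma integrable_on_bound:
  fixes h :: "_ \<Rightarrow> real"
  assumes \<Omega>: "\<Omega> \<in> sets lebesgue" "emeasure lebesgue \<Omega> < \<infinity>"
    and h: "h \<in> borel_measurable (lebesgue_on \<Omega>)" "AE x in lebesgue_on \<Omega>. \<bar>h x\<bar> \<le> B"
  shows "integrable (lebesgue_on \<Omega>) h"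
proof -
  interpret finite_measure "lebesgue_on \<Omega>" by (rule fm_on[OF \<Omega>])
  show ?thesis by (rule integrable_const_bound[where B=B]) (use h in auto)
qed

lemma prod_err:
  fixes a b a' b' q r h \<epsilon> K :: real
  assumes "h \<noteq> 0" "\<bar>q\<bar> \<le> \<epsilon>" "\<bar>r\<bar> \<le> \<epsilon>" "\<bar>h\<bar> \<le> \<epsilon>" "\<epsilon> \<le> 1"
    "\<bar>a\<bar> \<le> K" "\<bar>b\<bar> \<le> K" "\<bar>a'\<bar> \<le> K" "\<bar>b'\<bar> \<le> K"
    "q = (A - a) / h - a'" "r = (Bh - b) / h - b'"
  shows "\<bar>(A * Bh - a * b) / h - (a' * b + a * b')\<bar> \<le> \<epsilon> * (1 + 4 * K + K\<^sup>2)"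
proof -
  have A: "A = a + h * (q + a')" using assms by (simp add: field_simps)
  have B: "Bh = b + h * (r + b')" using assms by (simp add: field_simps)
  have E: "(A * Bh - a * b) / h - (a' * b + a * b') = q * b + q * h * (r + b') + a' * h * (r + b') + a * r"
    unfolding A B using assms(1) by (simp add: field_simps)
  have K0: "K \<ge> 0" using assms(6) by linarith
  have rb: "\<bar>r + b'\<bar> \<le> 1 + K" using assms by linarith
  have e0: "\<epsilon> \<ge> 0" using assms(2) by linarith
  have 1: "\<bar>q * b\<bar> \<le> \<epsilon> * K" unfolding abs_mult by (rule mult_mono) (use assms e0 in auto)
  have 2: "\<bar>q * h * (r + b')\<bar> \<le> \<epsilon> * 1 * (1 + K)" unfolding abs_mult
    by (intro mult_mono) (use assms e0 rb in auto)
  have 3: "\<bar>a' * h * (r + b')\<bar> \<le> K * \<epsilon> * (1 + K)" unfolding abs_mult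
    by (intro mult_mono) (use assms e0 rb K0 in auto)
  have 4: "\<bar>a * r\<bar> \<le> K * \<epsilon>" unfolding abs_mult by (rule mult_mono) (use assms e0 K0 in auto)
  have "\<bar>q * b + q * h * (r + b') + a' * h * (r + b') + a * r\<bar> \<le> \<epsilon> * K + \<epsilon> * 1 * (1 + K) + K * \<epsilon> * (1 + K) + K * \<epsilon>"
    using 1 2 3 4 by linarith
  also have "\<dots> \<le> \<epsilon> * (1 + 4 * K + K\<^sup>2)" using e0 K0 by (simp add: algebra_simps power2_eq_square)
  finally show ?thesis unfolding E .
qed

lemma int_prod:
  assumes \<Omega>: "\<Omega> \<in> sets lebesgue" "emeasure lebesgue \<Omega> < \<infinity>"
    and g: "g1 \<in> Linf \<Omega>" "g2 \<in> Linf \<Omega>"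
  shows "integrable (lebesgue_on \<Omega>) (\<lambda>x. g1 x * g2 x)"
proof -
  obtain B1 where B1: "B1 \<ge> 0" "AE x in lebesgue_on \<Omega>. \<bar>g1 x\<bar> \<le> B1" using Linf_ex[OF g(1)] by auto
  obtain B2 where B2: "B2 \<ge> 0" "AE x in lebesgue_on \<Omega>. \<bar>g2 x\<bar> \<le> B2" using Linf_ex[OF g(2)] by auto
  have [measurable]: "g1 \<in> borel_measurable (lebesgue_on \<Omega>)" "g2 \<in> borel_measurable (lebesgue_on \<Omega>)"
    using g by (auto simp: Linf_meas)
  show ?thesis
  proof (rule integrable_on_bound[OF \<Omega>, where B="B1 * B2"])
    show "AE x in lebesgue_on \<Omega>. \<bar>g1 x * g2 x\<bar> \<le> B1 * B2"
      using B1(2) B2(2) by eventually_elim (use B1 B2 in \<open>auto simp: abs_mult intro!: mult_mono\<close>)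
  qed measurable
qed

lemma deriv_prod:
  fixes u u' v v' :: "real \<Rightarrow> real^'n \<Rightarrow> real"
  assumes \<Omega>: "\<Omega> \<in> sets lebesgue" "emeasure lebesgue \<Omega> < \<infinity>"
    and U: "Linf_C1 \<Omega> u u'" and V: "Linf_C1 \<Omega> v v'" and t: "t \<ge> 0"
  shows "((\<lambda>s. \<integral>x. u s x * v s x \<partial>lebesgue_on \<Omega>) has_real_derivative
            (\<integral>x. u' t x * v t x + u t x * v' t x \<partial>lebesgue_on \<Omega>)) (at t within {0..})"
proof -
  let ?M = "lebesgue_on \<Omega>"
  let ?P = "\<lambda>s. \<integral>x. u s x * v s x \<partial>?M"
  let ?D = "\<integral>x. u' t x * v t x + u t x * v' t x \<partial>?M"
  define \<mu> where "\<mu> = measure lebesgue \<Omega>"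
  have \<mu>0: "\<mu> \<ge> 0" unfolding \<mu>_def by simp
  have Lu: "\<And>s. s \<ge> 0 \<Longrightarrow> u s \<in> Linf \<Omega> \<and> u' s \<in> Linf \<Omega>" using U by (simp add: Linf_C1_def)
  have Lv: "\<And>s. s \<ge> 0 \<Longrightarrow> v s \<in> Linf \<Omega> \<and> v' s \<in> Linf \<Omega>" using V by (simp add: Linf_C1_def)
  obtain K1 where K1: "K1 \<ge> 0" "AE x in ?M. \<bar>u t x\<bar> \<le> K1" using Linf_ex Lu[OF t] by blast
  obtain K2 where K2: "K2 \<ge> 0" "AE x in ?M. \<bar>u' t x\<bar> \<le> K2" using Linf_ex Lu[OF t] by blast
  obtain K3 where K3: "K3 \<ge> 0" "AE x in ?M. \<bar>v t x\<bar> \<le> K3" using Linf_ex Lv[OF t] by blast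
  obtain K4 where K4: "K4 \<ge> 0" "AE x in ?M. \<bar>v' t x\<bar> \<le> K4" using Linf_ex Lv[OF t] by blast
  define K where "K = K1 + K2 + K3 + K4"
  have K0: "K \<ge> 0" using K1 K2 K3 K4 by (simp add: K_def)
  have KAE: "AE x in ?M. \<bar>u t x\<bar> \<le> K \<and> \<bar>u' t x\<bar> \<le> K \<and> \<bar>v t x\<bar> \<le> K \<and> \<bar>v' t x\<bar> \<le> K"
    using K1(2) K2(2) K3(2) K4(2) by eventually_elim (use K1 K2 K3 K4 in \<open>auto simp: K_def\<close>)
  have qlim: "((\<lambda>h. Linf_norm \<Omega> (\<lambda>x. (u (t + h) x - u t x) / h - u' t x)) \<longlongrightarrow> 0) (at 0 within {-t..})"
    using U t by (simp add: Linf_C1_def)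
  have rlim: "((\<lambda>h. Linf_norm \<Omega> (\<lambda>x. (v (t + h) x - v t x) / h - v' t x)) \<longlongrightarrow> 0) (at 0 within {-t..})"
    using V t by (simp add: Linf_C1_def)
  define L0 where "L0 = (1 + 4 * K + K\<^sup>2) * \<mu> + 1"
  have L0: "L0 > 0" unfolding L0_def using K0 \<mu>0 by (simp add: add_nonneg_pos)
  show ?thesis
    unfolding has_field_derivative_iff
  proof (rule tendstoI)
    fix e :: real assume e: "e > 0"
    define \<epsilon> where "\<epsilon> = min 1 (e / (2 * L0))"
    have \<epsilon>0: "\<epsilon> > 0" using e L0 by (simp add: \<epsilon>_def)
    have \<epsilon>1: "\<epsilon> \<le> 1" by (simp add: \<epsilon>_def)
    have \<epsilon>L: "\<epsilon> * L0 \<le> e / 2"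
    proof -
      have "\<epsilon> \<le> e / (2 * L0)" by (simp add: \<epsilon>_def)
      then have "\<epsilon> * L0 \<le> e / (2 * L0) * L0" using L0 by (intro mult_right_mono) auto
      also have "\<dots> = e / 2" using L0 by simp
      finally show ?thesis .
    qed
    have "eventually (\<lambda>h. Linf_norm \<Omega> (\<lambda>x. (u (t + h) x - u t x) / h - u' t x) < ereal \<epsilon>) (at 0 within {-t..})"
      by (rule order_tendstoD(2)[OF qlim]) (use \<epsilon>0 in simp)
    then obtain d1 where d1: "d1 > 0" "\<And>h. h \<in> {-t..} \<Longrightarrow> h \<noteq> 0 \<Longrightarrow> dist h 0 < d1 \<Longrightarrow>
        Linf_norm \<Omega> (\<lambda>x. (u (t + h) x - u t x) / h - u' t x) < ereal \<epsilon>"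
      unfolding eventually_at by blast
    have "eventually (\<lambda>h. Linf_norm \<Omega> (\<lambda>x. (v (t + h) x - v t x) / h - v' t x) < ereal \<epsilon>) (at 0 within {-t..})"
      by (rule order_tendstoD(2)[OF rlim]) (use \<epsilon>0 in simp)
    then obtain d2 where d2: "d2 > 0" "\<And>h. h \<in> {-t..} \<Longrightarrow> h \<noteq> 0 \<Longrightarrow> dist h 0 < d2 \<Longrightarrow>
        Linf_norm \<Omega> (\<lambda>x. (v (t + h) x - v t x) / h - v' t x) < ereal \<epsilon>"
      unfolding eventually_at by blast
    show "eventually (\<lambda>y. dist ((?P y - ?P t) / (y - t)) ?D < e) (at t within {0..})"
      unfolding eventually_at
    proof (intro exI[of _ "min \<epsilon> (min d1 d2)"] conjI ballI impI)
      show "0 < min \<epsilon> (min d1 d2)" using \<epsilon>0 d1 d2 by simp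
      fix y :: real assume y: "y \<in> {0..}" and yt: "y \<noteq> t \<and> dist y t < min \<epsilon> (min d1 d2)"
      define h where "h = y - t"
      have yh: "y = t + h" by (simp add: h_def)
      have h0: "h \<noteq> 0" and hS: "h \<in> {-t..}" using y yt by (auto simp: h_def)
      have hd: "dist h 0 < d1" "dist h 0 < d2" "\<bar>h\<bar> \<le> \<epsilon>" using yt by (auto simp: h_def dist_real_def)
      have q: "AE x in ?M. \<bar>(u (t + h) x - u t x) / h - u' t x\<bar> \<le> \<epsilon>"
        by (rule Linf_AE) (use d1(2)[OF hS h0 hd(1)] in simp)
      have r: "AE x in ?M. \<bar>(v (t + h) x - v t x) / h - v' t x\<bar> \<le> \<epsilon>"
        by (rule Linf_AE) (use d2(2)[OF hS h0 hd(2)] in simp)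
      have y0: "y \<ge> 0" using y by simp
      have [measurable]: "u y \<in> borel_measurable ?M" "v y \<in> borel_measurable ?M"
        "u t \<in> borel_measurable ?M" "v t \<in> borel_measurable ?M"
        "u' t \<in> borel_measurable ?M" "v' t \<in> borel_measurable ?M"
        using Lu[OF y0] Lv[OF y0] Lu[OF t] Lv[OF t] by (auto simp: Linf_meas)
      have i1: "integrable ?M (\<lambda>x. u y x * v y x)" using int_prod[OF \<Omega>] Lu[OF y0] Lv[OF y0] by blast
      have i2: "integrable ?M (\<lambda>x. u t x * v t x)" using int_prod[OF \<Omega>] Lu[OF t] Lv[OF t] by blast
      have i3: "integrable ?M (\<lambda>x. u' t x * v t x + u t x * v' t x)"
        using int_prod[OF \<Omega>, of "u' t" "v t"] int_prod[OF \<Omega>, of "u t" "v' t"] Lu[OF t] Lv[OF t]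
        by (intro Bochner_Integration.integrable_add) auto
      have eq: "(?P y - ?P t) / (y - t) - ?D =
          (\<integral>x. (u y x * v y x - u t x * v t x) / h - (u' t x * v t x + u t x * v' t x) \<partial>?M)"
        using i1 i2 i3 by (simp add: integral_diff[symmetric] integral_divide_zero h_def)
      have "\<bar>\<integral>x. (u y x * v y x - u t x * v t x) / h - (u' t x * v t x + u t x * v' t x) \<partial>?M\<bar>
            \<le> (\<epsilon> * (1 + 4 * K + K\<^sup>2)) * \<mu>"
        unfolding \<mu>_def
      proof (rule int_bound[OF \<Omega>])
        show "AE x in ?M. \<bar>(u y x * v y x - u t x * v t x) / h - (u' t x * v t x + u t x * v' t x)\<bar>
               \<le> \<epsilon> * (1 + 4 * K + K\<^sup>2)"
          using q r KAE
        proof eventually_elim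
          case (elim x)
          show ?case
            by (rule prod_err[OF h0 _ _ hd(3) \<epsilon>1, where q="(u (t + h) x - u t x) / h - u' t x"
                  and r="(v (t + h) x - v t x) / h - v' t x"]) (use elim in \<open>auto simp: yh\<close>)
        qed
      qed measurable
      also have "\<dots> \<le> \<epsilon> * L0" unfolding L0_def using \<epsilon>0
        by (simp add: algebra_simps)
      also have "\<dots> < e" using \<epsilon>L e by linarith
      finally show "dist ((?P y - ?P t) / (y - t)) ?D < e"
        unfolding dist_real_def eq .
    qed
  qed
qed


lemma int_pair_bounded:
  fixes h :: "'a::euclidean_space \<times> 'a \<Rightarrow> real"
  assumes \<Omega>: "\<Omega> \<in> sets lebesgue" "emeasure lebesgue \<Omega> < \<infinity>"
    and h: "h \<in> borel_measurable (lebesgue \<Otimes>\<^sub>M lebesgue)" "\<And>p. \<bar>h p\<bar> \<le> C"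
  shows "integrable (lebesgue \<Otimes>\<^sub>M lebesgue) (\<lambda>p. indicator (\<Omega> \<times> \<Omega>) p * h p)"
proof (rule integrableI_bounded_set[where A="\<Omega> \<times> \<Omega>" and B=C])
  show "\<Omega> \<times> \<Omega> \<in> sets (lebesgue \<Otimes>\<^sub>M lebesgue)" using \<Omega> by auto
  show "(\<lambda>p. indicator (\<Omega> \<times> \<Omega>) p * h p) \<in> borel_measurable (lebesgue \<Otimes>\<^sub>M lebesgue)"
    using h(1) \<Omega>(1) by measurable
  have "emeasure (lebesgue \<Otimes>\<^sub>M lebesgue) (\<Omega> \<times> \<Omega>) = emeasure lebesgue \<Omega> * emeasure lebesgue \<Omega>"
    by (rule sigma_finite_measure.emeasure_pair_measure_Times[OF sf_leb \<Omega>(1) \<Omega>(1)])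
  then show "emeasure (lebesgue \<Otimes>\<^sub>M lebesgue) (\<Omega> \<times> \<Omega>) < \<infinity>"
    using \<Omega>(2) by (simp add: ennreal_mult_less_top)
  show "AE x in lebesgue \<Otimes>\<^sub>M lebesgue. x \<in> \<Omega> \<times> \<Omega> \<longrightarrow> norm (indicator (\<Omega> \<times> \<Omega>) x * h x) \<le> C"
    using h(2) by (auto simp: indicator_def)
  show "AE x in lebesgue \<Otimes>\<^sub>M lebesgue. x \<notin> \<Omega> \<times> \<Omega> \<longrightarrow> indicator (\<Omega> \<times> \<Omega>) x * h x = 0"
    by simp
qed

lemma gamma_identity:
  fixes k :: "'a::euclidean_space \<Rightarrow> 'a \<Rightarrow> real" and g z :: "'a \<Rightarrow> real"
  assumes \<Omega>: "\<Omega> \<in> sets lebesgue" "emeasure lebesgue \<Omega> < \<infinity>"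
    and k: "(\<lambda>p. k (fst p) (snd p)) \<in> borel_measurable (lebesgue \<Otimes>\<^sub>M lebesgue)"
      "\<And>x y. \<bar>k x y\<bar> \<le> Kb" "\<And>x y. k x y = k y x"
    and g: "g \<in> borel_measurable lebesgue" "\<And>x. \<bar>g x\<bar> \<le> B"
    and z: "z \<in> borel_measurable lebesgue" "\<And>x. \<bar>z x\<bar> \<le> B"
  shows "integrable (lebesgue_on \<Omega>) (\<lambda>x. g x * (\<integral>y. k x y * (z y - z x) \<partial>lebesgue_on \<Omega>))"
    and "(\<integral>x. g x * (\<integral>y. k x y * (z y - z x) \<partial>lebesgue_on \<Omega>) \<partial>lebesgue_on \<Omega>) =
         - (1/2) * (\<integral>p. indicator (\<Omega> \<times> \<Omega>) p * (k (fst p) (snd p) *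
              ((g (fst p) - g (snd p)) * (z (fst p) - z (snd p)))) \<partial>(lebesgue \<Otimes>\<^sub>M lebesgue))"
proof -
  let ?L = "lebesgue :: 'a measure"
  have [measurable]: "g \<in> borel_measurable ?L" "z \<in> borel_measurable ?L" "\<Omega> \<in> sets ?L" using g z \<Omega> by auto
  have km[measurable]: "(\<lambda>p. k (fst p) (snd p)) \<in> borel_measurable (?L \<Otimes>\<^sub>M ?L)" by (rule k(1))
  have B0: "B \<ge> 0" using g(2)[of 0] by linarith
  have Kb0: "Kb \<ge> 0" using k(2)[of 0 0] by linarith
  define h where "h p = k (fst p) (snd p) * (g (fst p) * (z (snd p) - z (fst p)))" for p
  define f where "f p = indicator (\<Omega> \<times> \<Omega>) p * h p" for p
  have hm[measurable]: "h \<in> borel_measurable (?L \<Otimes>\<^sub>M ?L)" unfolding h_def by measurable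
  have zb: "\<bar>z a - z b\<bar> \<le> B + B" for a b using z(2)[of a] z(2)[of b] by (smt (verit))
  have hb: "\<bar>h p\<bar> \<le> Kb * (B * (B + B))" for p
    unfolding h_def abs_mult
    by (intro mult_mono) (use k(2) g(2) zb B0 Kb0 in auto)
  have intf: "integrable (?L \<Otimes>\<^sub>M ?L) f" unfolding f_def by (rule int_pair_bounded[OF \<Omega> hm hb])
  define G where "G x = (\<integral>y. k x y * (z y - z x) \<partial>lebesgue_on \<Omega>)" for x
  have inner: "(\<integral>y. f (x, y) \<partial>?L) = indicator \<Omega> x * (g x * G x)" for x
  proof -
    have "(\<integral>y. f (x, y) \<partial>?L) = (\<integral>y. (indicator \<Omega> x * g x) * (indicator \<Omega> y * (k x y * (z y - z x))) \<partial>?L)"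
      unfolding f_def h_def by (intro Bochner_Integration.integral_cong) (auto simp: indicator_times)
    also have "\<dots> = (indicator \<Omega> x * g x) * (\<integral>y. indicator \<Omega> y * (k x y * (z y - z x)) \<partial>?L)"
      by (rule integral_mult_right_zero)
    also have "(\<integral>y. indicator \<Omega> y * (k x y * (z y - z x)) \<partial>?L) = G x"
      unfolding G_def using \<Omega> by (simp add: integral_restrict_space)
    finally show ?thesis by simp
  qed
  have "integrable ?L (\<lambda>x. \<integral>y. f (x, y) \<partial>?L)" by (rule LL.integrable_fst'[OF intf])
  then have intL: "integrable ?L (\<lambda>x. indicator \<Omega> x * (g x * G x))" unfolding inner .
  then show "integrable (lebesgue_on \<Omega>) (\<lambda>x. g x * (\<integral>y. k x y * (z y - z x) \<partial>lebesgue_on \<Omega>))"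
    using \<Omega> by (simp add: integrable_restrict_space G_def)
  have I1: "(\<integral>x. g x * G x \<partial>lebesgue_on \<Omega>) = integral\<^sup>L (?L \<Otimes>\<^sub>M ?L) f"
  proof -
    have "(\<integral>x. g x * G x \<partial>lebesgue_on \<Omega>) = (\<integral>x. indicator \<Omega> x * (g x * G x) \<partial>?L)"
      using \<Omega> by (simp add: integral_restrict_space)
    also have "\<dots> = (\<integral>x. (\<integral>y. f (x, y) \<partial>?L) \<partial>?L)" unfolding inner ..
    also have "\<dots> = integral\<^sup>L (?L \<Otimes>\<^sub>M ?L) f" by (rule LL.integral_fst'[OF intf])
    finally show ?thesis .
  qed
  have fm: "f \<in> borel_measurable (?L \<Otimes>\<^sub>M ?L)" unfolding f_def by measurable
  have swap: "(\<integral>(x, y). f (y, x) \<partial>(?L \<Otimes>\<^sub>M ?L)) = integral\<^sup>L (?L \<Otimes>\<^sub>M ?L) f"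
    by (rule LL.integral_product_swap[OF fm])
  define h2 where "h2 p = k (fst p) (snd p) * (g (snd p) * (z (fst p) - z (snd p)))" for p
  have h2m[measurable]: "h2 \<in> borel_measurable (?L \<Otimes>\<^sub>M ?L)" unfolding h2_def by measurable
  have h2b: "\<bar>h2 p\<bar> \<le> Kb * (B * (B + B))" for p
    unfolding h2_def abs_mult
    by (intro mult_mono) (use k(2) g(2) zb B0 Kb0 in auto)
  have sw: "(\<lambda>(x, y). f (y, x)) = (\<lambda>p. indicator (\<Omega> \<times> \<Omega>) p * h2 p)"
    by (auto simp: f_def h_def h2_def indicator_times k(3) fun_eq_iff)
  have int2: "integrable (?L \<Otimes>\<^sub>M ?L) (\<lambda>p. indicator (\<Omega> \<times> \<Omega>) p * h2 p)"
    by (rule int_pair_bounded[OF \<Omega> h2m h2b])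
  have "2 * (\<integral>x. g x * G x \<partial>lebesgue_on \<Omega>) =
      integral\<^sup>L (?L \<Otimes>\<^sub>M ?L) f + (\<integral>p. indicator (\<Omega> \<times> \<Omega>) p * h2 p \<partial>(?L \<Otimes>\<^sub>M ?L))"
    using I1 swap sw by simp
  also have "\<dots> = (\<integral>p. f p + indicator (\<Omega> \<times> \<Omega>) p * h2 p \<partial>(?L \<Otimes>\<^sub>M ?L))"
    by (rule Bochner_Integration.integral_add[symmetric, OF intf int2])
  also have "\<dots> = - (\<integral>p. indicator (\<Omega> \<times> \<Omega>) p * (k (fst p) (snd p) *
              ((g (fst p) - g (snd p)) * (z (fst p) - z (snd p)))) \<partial>(?L \<Otimes>\<^sub>M ?L))"
    unfolding integral_minus[symmetric]
    by (intro Bochner_Integration.integral_cong) (auto simp: f_def h_def h2_def algebra_simps)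
  finally show "(\<integral>x. g x * (\<integral>y. k x y * (z y - z x) \<partial>lebesgue_on \<Omega>) \<partial>lebesgue_on \<Omega>) =
         - (1/2) * (\<integral>p. indicator (\<Omega> \<times> \<Omega>) p * (k (fst p) (snd p) *
              ((g (fst p) - g (snd p)) * (z (fst p) - z (snd p)))) \<partial>(lebesgue \<Otimes>\<^sub>M lebesgue))"
    unfolding G_def by linarith
qed


lemma fst_L: "(\<lambda>p. fst p) \<in> borel_measurable ((lebesgue :: ('a::euclidean_space) measure) \<Otimes>\<^sub>M (lebesgue :: 'a measure))"
proof -
  have 1: "id \<in> borel_measurable (lebesgue :: 'a measure)" by simp
  have 2: "fst \<in> measurable (lebesgue \<Otimes>\<^sub>M lebesgue) (lebesgue :: 'a measure)" by (rule measurable_fst)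
  from measurable_comp[OF 2 1] show ?thesis by simp
qed
lemma snd_L: "(\<lambda>p. snd p) \<in> borel_measurable ((lebesgue :: ('a::euclidean_space) measure) \<Otimes>\<^sub>M (lebesgue :: 'a measure))"
proof -
  have 1: "id \<in> borel_measurable (lebesgue :: 'a measure)" by simp
  have 2: "snd \<in> measurable (lebesgue \<Otimes>\<^sub>M lebesgue) (lebesgue :: 'a measure)" by (rule measurable_snd)
  from measurable_comp[OF 2 1] show ?thesis by simp
qed
lemma t5:
  fixes \<phi> :: "real^'n \<Rightarrow> real"
  assumes cont: "continuous_on UNIV \<phi>"
  shows "(\<lambda>p. kernel \<phi> j (fst p) (snd p)) \<in> borel_measurable (lebesgue \<Otimes>\<^sub>M lebesgue)"
proof -
  have m1: "\<phi> \<in> borel_measurable borel" by (rule borel_measurable_continuous_onI[OF cont])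
  have m2: "(\<lambda>p. real j *\<^sub>R (fst p - snd p)) \<in> borel_measurable (lebesgue \<Otimes>\<^sub>M (lebesgue :: (real^'n) measure))"
    by (intro borel_measurable_scaleR borel_measurable_const borel_measurable_diff fst_L snd_L)
  have "(\<lambda>p. \<phi> (real j *\<^sub>R (fst p - snd p))) \<in> borel_measurable (lebesgue \<Otimes>\<^sub>M (lebesgue :: (real^'n) measure))"
    using measurable_compose[OF m2 m1] .
  then show ?thesis unfolding kernel_def by (intro borel_measurable_times borel_measurable_const)
qed
lemma supp_cball: fixes \<phi> :: "real^'n \<Rightarrow> real" assumes supp: "closure {x. \<phi> x \<noteq> 0} \<subseteq> ball 0 1"
  and "\<phi> x \<noteq> 0" shows "x \<in> cball 0 1"
proof -
  have "x \<in> {x. \<phi> x \<noteq> 0}" using assms(2) by simp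
  then have "x \<in> closure {x. \<phi> x \<noteq> 0}" by (rule closure_subset[THEN subsetD])
  then have "x \<in> ball 0 1" using supp by (rule subsetD[rotated])
  then show ?thesis by (rule ball_subset_cball[THEN subsetD])
qed

lemma smooth_cont:
  fixes \<phi> :: "real^'n \<Rightarrow> real"
  assumes sm: "smooth_fun \<phi>"
  shows "continuous_on UNIV \<phi>"
proof -
  obtain P :: "'n list \<Rightarrow> real^'n \<Rightarrow> real" where "P [] = \<phi>" "\<forall>is. continuous_on UNIV (P is)"
    using sm unfolding smooth_fun_def by blast
  then show "continuous_on UNIV \<phi>" by metis
qed

lemma cont_ball_bound:
  fixes \<phi> :: "real^'n \<Rightarrow> real"
  assumes cont: "continuous_on UNIV \<phi>"
  shows "\<exists>a. \<forall>x\<in>cball 0 1. norm (\<phi> x) \<le> a"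
proof -
  have "compact (\<phi> ` cball 0 1)"
    by (rule compact_continuous_image[OF continuous_on_subset[OF cont]]) auto
  then have "bounded (\<phi> ` cball 0 1)" by (rule compact_imp_bounded)
  then show ?thesis unfolding bounded_iff by auto
qed

lemma kernel_props:
  fixes \<phi> :: "real^'n \<Rightarrow> real"
  assumes sm: "smooth_fun \<phi>" and nn: "\<And>x. \<phi> x \<ge> 0" and supp: "closure {x. \<phi> x \<noteq> 0} \<subseteq> ball 0 1"
    and rad: "\<exists>\<psi>::real \<Rightarrow> real. antimono_on {0..} \<psi> \<and> (\<forall>x. \<phi> x = \<psi> (norm x))"
  shows "\<exists>Kb. \<forall>x y. \<bar>kernel \<phi> j x y\<bar> \<le> Kb"
    and "\<And>x y. kernel \<phi> j x y = kernel \<phi> j y x"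
    and "\<And>x y. kernel \<phi> j x y \<ge> 0"
    and "(\<lambda>p. kernel \<phi> j (fst p) (snd p)) \<in> borel_measurable (lebesgue \<Otimes>\<^sub>M lebesgue)"
proof -
  have cont: "continuous_on UNIV \<phi>" by (rule smooth_cont[OF sm])
  obtain a where a: "\<forall>x\<in>cball 0 1. norm (\<phi> x) \<le> a" using cont_ball_bound[OF cont] by blast
  have phib: "\<bar>\<phi> x\<bar> \<le> a" for x
  proof (cases "\<phi> x = 0")
    case True
    have "norm (\<phi> 0) \<le> a" using a by simp
    then have "0 \<le> a" using norm_ge_zero order.trans by blast
    with True show ?thesis by simp
  next
    case False
    then have "x \<in> cball 0 1" by (rule supp_cball[OF supp])
    then show ?thesis using a by simp
  qed
  show "\<exists>Kb. \<forall>x y. \<bar>kernel \<phi> j x y\<bar> \<le> Kb"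
  proof (rule exI[of _ "real j ^ (CARD('n) + 2) * a"], intro allI)
    fix x y
    show "\<bar>kernel \<phi> j x y\<bar> \<le> real j ^ (CARD('n) + 2) * a"
      unfolding kernel_def abs_mult by (simp add: mult_left_mono phib)
  qed
  obtain \<psi> :: "real \<Rightarrow> real" where psi: "\<forall>x. \<phi> x = \<psi> (norm x)" using rad by blast
  show "kernel \<phi> j x y = kernel \<phi> j y x" for x y
    unfolding kernel_def psi[rule_format] by (simp add: norm_minus_commute)
  show "kernel \<phi> j x y \<ge> 0" for x y unfolding kernel_def using nn by simp
  show "(\<lambda>p. kernel \<phi> j (fst p) (snd p)) \<in> borel_measurable (lebesgue \<Otimes>\<^sub>M lebesgue)"
    by (rule t5[OF cont])
qed

definition trunc :: "'a set \<Rightarrow> real \<Rightarrow> ('a \<Rightarrow> real) \<Rightarrow> 'a \<Rightarrow> real" where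
  "trunc \<Omega> B z x = indicator \<Omega> x * max (- B) (min B (z x))"

lemma trunc_meas:
  fixes z :: "'a::euclidean_space \<Rightarrow> real"
  assumes "\<Omega> \<in> sets lebesgue" "z \<in> borel_measurable (lebesgue_on \<Omega>)"
  shows "trunc \<Omega> B z \<in> borel_measurable lebesgue"
proof -
  have "(\<lambda>x. max (- B) (min B (z x))) \<in> borel_measurable (lebesgue_on \<Omega>)" using assms(2) by measurable
  from meas_restrict_ext[OF assms(1) this] show ?thesis unfolding trunc_def[abs_def] .
qed

lemma trunc_bound: "B \<ge> 0 \<Longrightarrow> \<bar>trunc \<Omega> B z x\<bar> \<le> B"
  by (auto simp: trunc_def indicator_def)

lemma trunc_AE:
  fixes z :: "'a::euclidean_space \<Rightarrow> real"
  assumes "\<Omega> \<in> sets lebesgue" "AE x in lebesgue_on \<Omega>. \<bar>z x\<bar> \<le> B"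
  shows "AE x in lebesgue_on \<Omega>. trunc \<Omega> B z x = z x"
proof -
  have "AE x in lebesgue_on \<Omega>. x \<in> \<Omega>" using AE_space[of "lebesgue_on \<Omega>"] assms(1) by (simp add: space_on)
  with assms(2) show ?thesis by eventually_elim (auto simp: trunc_def)
qed

lemma kernel_meas_y:
  fixes \<phi> :: "real^'n \<Rightarrow> real"
  assumes cont: "continuous_on UNIV \<phi>"
  shows "(\<lambda>y. kernel \<phi> j x y) \<in> borel_measurable lebesgue"
proof -
  have "continuous_on UNIV (\<lambda>y. kernel \<phi> j x y)"
    unfolding kernel_def
    by (intro continuous_intros continuous_on_compose2[OF cont]) auto
  then have "(\<lambda>y. kernel \<phi> j x y) \<in> borel_measurable borel" by (rule borel_measurable_continuous_onI)
  from measurable_comp[OF id_borel_measurable_lebesgue this] show ?thesis by (simp add: comp_def)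
qed

lemma Gamma_on:
  assumes "\<Omega> \<in> sets lebesgue"
  shows "Gamma \<Omega> \<phi> j z x = (\<integral>y. kernel \<phi> j x y * (z y - z x) \<partial>lebesgue_on \<Omega>)"
  unfolding Gamma_def set_lebesgue_integral_def using assms by (simp add: integral_restrict_space)

lemma Gamma_cong:
  fixes \<phi> :: "real^'n \<Rightarrow> real"
  assumes \<Omega>: "\<Omega> \<in> sets lebesgue" and cont: "continuous_on UNIV \<phi>"
    and z: "z \<in> borel_measurable (lebesgue_on \<Omega>)" "z2 \<in> borel_measurable (lebesgue_on \<Omega>)"
    and ae: "AE y in lebesgue_on \<Omega>. z y = z2 y" and zx: "z x = z2 x"
  shows "Gamma \<Omega> \<phi> j z x = Gamma \<Omega> \<phi> j z2 x"
proof -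
  have [measurable]: "(\<lambda>y. kernel \<phi> j x y) \<in> borel_measurable (lebesgue_on \<Omega>)"
    by (rule measurable_restrict_space1[OF kernel_meas_y[OF cont]])
  have [measurable]: "z \<in> borel_measurable (lebesgue_on \<Omega>)" "z2 \<in> borel_measurable (lebesgue_on \<Omega>)" using z by auto
  show ?thesis unfolding Gamma_on[OF \<Omega>]
    by (rule integral_cong_AE) (use ae zx in \<open>auto elim!: eventually_mono\<close>)
qed

lemma Gamma_meas:
  fixes k :: "'a::euclidean_space \<Rightarrow> 'a \<Rightarrow> real"
  assumes \<Omega>: "\<Omega> \<in> sets lebesgue"
    and km: "(\<lambda>p. k (fst p) (snd p)) \<in> borel_measurable (lebesgue \<Otimes>\<^sub>M lebesgue)"
    and z: "z \<in> borel_measurable lebesgue"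
  shows "(\<lambda>x. \<integral>y. k x y * (z y - z x) \<partial>lebesgue_on \<Omega>) \<in> borel_measurable lebesgue"
proof -
  have eq: "(\<integral>y. k x y * (z y - z x) \<partial>lebesgue_on \<Omega>) = (\<integral>y. indicator \<Omega> y * (k x y * (z y - z x)) \<partial>lebesgue)" for x
    using \<Omega> by (simp add: integral_restrict_space)
  have [measurable]: "\<Omega> \<in> sets lebesgue" "z \<in> borel_measurable lebesgue" using \<Omega> z by auto
  have [measurable]: "(\<lambda>p. k (fst p) (snd p)) \<in> borel_measurable (lebesgue \<Otimes>\<^sub>M lebesgue)" by (rule km)
  have "(\<lambda>(x, y). indicator \<Omega> y * (k x y * (z y - z x))) \<in> borel_measurable (lebesgue \<Otimes>\<^sub>M lebesgue)"
    unfolding split_beta' by measurable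
  from sigma_finite_measure.borel_measurable_lebesgue_integral[OF sf_leb this]
  show ?thesis unfolding eq .
qed

lemma int_cont2:
  fixes a b :: "'a::euclidean_space \<Rightarrow> real" and \<rho> :: "real \<Rightarrow> real \<Rightarrow> real"
  assumes \<Omega>: "\<Omega> \<in> sets lebesgue" "emeasure lebesgue \<Omega> < \<infinity>"
    and a: "a \<in> borel_measurable lebesgue" "\<And>x. \<bar>a x\<bar> \<le> B"
    and b: "b \<in> borel_measurable lebesgue" "\<And>x. \<bar>b x\<bar> \<le> B"
    and \<rho>: "continuous_on UNIV (\<lambda>p. \<rho> (fst p) (snd p))"
  shows "integrable (lebesgue_on \<Omega>) (\<lambda>x. \<rho> (a x) (b x))"
proof -
  have "compact ((\<lambda>p. \<rho> (fst p) (snd p)) ` cbox (-B, -B) (B, B))"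
    by (rule compact_continuous_image[OF continuous_on_subset[OF \<rho>]]) auto
  then have "bounded ((\<lambda>p. \<rho> (fst p) (snd p)) ` cbox (-B, -B) (B, B))" by (rule compact_imp_bounded)
  then obtain C where C: "\<forall>p\<in>cbox (-B, -B) (B, B). norm (\<rho> (fst p) (snd p)) \<le> C"
    unfolding bounded_iff by auto
  have inbox: "(a x, b x) \<in> cbox (-B, -B) (B, B)" for x
    using a(2)[of x] b(2)[of x] by (auto simp: cbox_Pair_iff abs_le_iff)
  have m: "(\<lambda>p. \<rho> (fst p) (snd p)) \<in> borel_measurable borel" by (rule borel_measurable_continuous_onI[OF \<rho>])
  have "(\<lambda>x. (a x, b x)) \<in> borel_measurable lebesgue" using a(1) b(1) by measurable
  from measurable_compose[OF this m]
  have "(\<lambda>x. \<rho> (a x) (b x)) \<in> borel_measurable lebesgue" by simp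
  then have mm: "(\<lambda>x. \<rho> (a x) (b x)) \<in> borel_measurable (lebesgue_on \<Omega>)" by (rule measurable_restrict_space1)
  show ?thesis
    by (rule integrable_on_bound[OF \<Omega> mm, where B=C]) (use C inbox in force)
qed

lemma L2sq_eq:
  fixes g :: "real^'n \<Rightarrow> real"
  assumes \<Omega>: "\<Omega> \<in> sets lebesgue" and i: "integrable (lebesgue_on \<Omega>) (\<lambda>x. (g x)\<^sup>2)"
  shows "L2sq \<Omega> g = ennreal (\<integral>x. (g x)\<^sup>2 \<partial>lebesgue_on \<Omega>)"
proof -
  have "L2sq \<Omega> g = (\<integral>\<^sup>+x. ennreal ((g x)\<^sup>2) \<partial>lebesgue_on \<Omega>)"
    unfolding L2sq_def using \<Omega> by (simp add: nn_integral_restrict_space)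
  also have "\<dots> = ennreal (\<integral>x. (g x)\<^sup>2 \<partial>lebesgue_on \<Omega>)"
    by (rule nn_integral_eq_integral[OF i]) simp
  finally show ?thesis .
qed

definition Pform :: "('a::euclidean_space) set \<Rightarrow> ('a \<Rightarrow> 'a \<Rightarrow> real) \<Rightarrow> ('a \<Rightarrow> real) \<Rightarrow> ('a \<Rightarrow> real) \<Rightarrow> real" where
  "Pform \<Omega> k g z = (\<integral>p. indicator (\<Omega> \<times> \<Omega>) p * (k (fst p) (snd p) *
              ((g (fst p) - g (snd p)) * (z (fst p) - z (snd p)))) \<partial>(lebesgue \<Otimes>\<^sub>M lebesgue))"

lemma Pform_integrable:
  fixes k :: "'a::euclidean_space \<Rightarrow> 'a \<Rightarrow> real" and g z :: "'a \<Rightarrow> real"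
  assumes \<Omega>: "\<Omega> \<in> sets lebesgue" "emeasure lebesgue \<Omega> < \<infinity>"
    and k: "(\<lambda>p. k (fst p) (snd p)) \<in> borel_measurable (lebesgue \<Otimes>\<^sub>M lebesgue)" "\<And>x y. \<bar>k x y\<bar> \<le> Kb"
    and g: "g \<in> borel_measurable lebesgue" "\<And>x. \<bar>g x\<bar> \<le> B"
    and z: "z \<in> borel_measurable lebesgue" "\<And>x. \<bar>z x\<bar> \<le> B"
  shows "integrable (lebesgue \<Otimes>\<^sub>M lebesgue) (\<lambda>p. indicator (\<Omega> \<times> \<Omega>) p * (k (fst p) (snd p) *
              ((g (fst p) - g (snd p)) * (z (fst p) - z (snd p)))))"
proof (rule int_pair_bounded[OF \<Omega>, where C="Kb * ((B + B) * (B + B))"])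
  have [measurable]: "g \<in> borel_measurable lebesgue" "z \<in> borel_measurable lebesgue" using g z by auto
  have [measurable]: "(\<lambda>p. k (fst p) (snd p)) \<in> borel_measurable (lebesgue \<Otimes>\<^sub>M lebesgue)" by (rule k)
  show "(\<lambda>p. k (fst p) (snd p) * ((g (fst p) - g (snd p)) * (z (fst p) - z (snd p)))) \<in> borel_measurable (lebesgue \<Otimes>\<^sub>M lebesgue)"
    by measurable
  have zb: "\<bar>z a - z b\<bar> \<le> B + B" for a b using z(2)[of a] z(2)[of b] by (smt (verit))
  have gb: "\<bar>g a - g b\<bar> \<le> B + B" for a b using g(2)[of a] g(2)[of b] by (smt (verit))
  have B0: "B \<ge> 0" using g(2)[of 0] by linarith
  have Kb0: "Kb \<ge> 0" using k(2)[of 0 0] by linarith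
  show "\<bar>k (fst p) (snd p) * ((g (fst p) - g (snd p)) * (z (fst p) - z (snd p)))\<bar> \<le> Kb * ((B + B) * (B + B))" for p
    unfolding abs_mult by (intro mult_mono) (use k(2) zb gb B0 Kb0 in auto)
qed

lemma Yfun_eq:
  fixes \<phi> :: "real^'n \<Rightarrow> real" and z zt :: "real^'n \<Rightarrow> real"
  assumes \<Omega>: "\<Omega> \<in> sets lebesgue" "emeasure lebesgue \<Omega> < \<infinity>"
    and k: "(\<lambda>p. kernel \<phi> j (fst p) (snd p)) \<in> borel_measurable (lebesgue \<Otimes>\<^sub>M lebesgue)"
      "\<And>x y. \<bar>kernel \<phi> j x y\<bar> \<le> Kb" "\<And>x y. kernel \<phi> j x y \<ge> 0"
    and z: "z \<in> borel_measurable (lebesgue_on \<Omega>)"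
    and zt: "zt \<in> borel_measurable lebesgue" "\<And>x. \<bar>zt x\<bar> \<le> B"
    and ae: "AE x in lebesgue_on \<Omega>. z x = zt x"
  shows "Yfun \<Omega> \<phi> j z = ennreal (Pform \<Omega> (kernel \<phi> j) zt zt)"
proof -
  let ?L = "lebesgue :: (real^'n) measure"
  let ?k = "kernel \<phi> j"
  define zc where "zc x = indicator \<Omega> x * z x" for x
  have [measurable]: "zc \<in> borel_measurable ?L" unfolding zc_def by (rule meas_restrict_ext[OF \<Omega>(1) z])
  have [measurable]: "zt \<in> borel_measurable ?L" "\<Omega> \<in> sets ?L" using zt \<Omega> by auto
  have Q: "AE x in ?L. x \<in> \<Omega> \<longrightarrow> zc x = zt x"
    using ae \<Omega>(1) by (simp add: AE_restrict_space_iff zc_def)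
  have QQ: "AE x in ?L. AE y in ?L. (x \<in> \<Omega> \<longrightarrow> zc x = zt x) \<and> (y \<in> \<Omega> \<longrightarrow> zc y = zt y)"
    using Q
  proof eventually_elim
    case (elim x)
    show ?case using Q by eventually_elim (use elim in auto)
  qed
  have AEp: "AE p in ?L \<Otimes>\<^sub>M ?L. (fst p \<in> \<Omega> \<longrightarrow> zc (fst p) = zt (fst p)) \<and> (snd p \<in> \<Omega> \<longrightarrow> zc (snd p) = zt (snd p))"
  proof (rule LL.AE_pair_measure)
    show "{p \<in> space (?L \<Otimes>\<^sub>M ?L). (fst p \<in> \<Omega> \<longrightarrow> zc (fst p) = zt (fst p)) \<and> (snd p \<in> \<Omega> \<longrightarrow> zc (snd p) = zt (snd p))}
        \<in> sets (?L \<Otimes>\<^sub>M ?L)" by measurable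
    show "AE x in ?L. AE y in ?L. (fst (x, y) \<in> \<Omega> \<longrightarrow> zc (fst (x, y)) = zt (fst (x, y))) \<and> (snd (x, y) \<in> \<Omega> \<longrightarrow> zc (snd (x, y)) = zt (snd (x, y)))"
      using QQ by simp
  qed
  have "Yfun \<Omega> \<phi> j z = (\<integral>\<^sup>+p. ennreal (indicator (\<Omega> \<times> \<Omega>) p * (?k (fst p) (snd p) *
              ((zt (fst p) - zt (snd p)) * (zt (fst p) - zt (snd p))))) \<partial>(?L \<Otimes>\<^sub>M ?L))"
    unfolding Yfun_def
  proof (rule nn_integral_cong_AE)
    show "AE p in ?L \<Otimes>\<^sub>M ?L. ennreal (?k (fst p) (snd p) * (z (fst p) - z (snd p))\<^sup>2) * indicator (\<Omega> \<times> \<Omega>) p =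
        ennreal (indicator (\<Omega> \<times> \<Omega>) p * (?k (fst p) (snd p) * ((zt (fst p) - zt (snd p)) * (zt (fst p) - zt (snd p)))))"
      using AEp
    proof eventually_elim
      case (elim p)
      show ?case
      proof (cases "p \<in> \<Omega> \<times> \<Omega>")
        case True
        then have "z (fst p) = zt (fst p)" "z (snd p) = zt (snd p)" using elim by (auto simp: zc_def mem_Times_iff)
        then show ?thesis using True by (simp add: power2_eq_square)
      qed simp
    qed
  qed
  also have "\<dots> = ennreal (Pform \<Omega> ?k zt zt)"
    unfolding Pform_def
  proof (rule nn_integral_eq_integral)
    show "integrable (?L \<Otimes>\<^sub>M ?L) (\<lambda>p. indicator (\<Omega> \<times> \<Omega>) p * (?k (fst p) (snd p) * ((zt (fst p) - zt (snd p)) * (zt (fst p) - zt (snd p)))))"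
      by (rule Pform_integrable[OF \<Omega> k(1,2) zt zt])
    show "AE p in ?L \<Otimes>\<^sub>M ?L. 0 \<le> indicator (\<Omega> \<times> \<Omega>) p * (?k (fst p) (snd p) * ((zt (fst p) - zt (snd p)) * (zt (fst p) - zt (snd p))))"
      using k(3) by simp
  qed
  finally show ?thesis .
qed


lemma react_ineq:
  fixes a b \<alpha> f \<kappa> :: real
  assumes "\<alpha> \<ge> 0" "f > 0" "\<kappa> > 0" "a \<ge> 0" "b \<ge> 0"
  shows "2*\<alpha>*a*(-a*b\<^sup>2 + f*(1-a)) + 2*(a+b)*(f*(1-a) - (f+\<kappa>)*b)
     \<le> -2*\<alpha>*(a*b)\<^sup>2 - f*(\<alpha>*a\<^sup>2 + (a+b)\<^sup>2) + (\<alpha>+1)*f"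
proof -
  have eq: "-2*\<alpha>*(a*b)\<^sup>2 - f*(\<alpha>*a\<^sup>2 + (a+b)\<^sup>2) + (\<alpha>+1)*f - (2*\<alpha>*a*(-a*b\<^sup>2 + f*(1-a)) + 2*(a+b)*(f*(1-a) - (f+\<kappa>)*b))
     = \<alpha>*f*(1-a)\<^sup>2 + f*(1-(a+b))\<^sup>2 + 2*\<kappa>*(a+b)*b"
    by (simp add: algebra_simps power2_eq_square)
  have "0 \<le> \<alpha>*f*(1-a)\<^sup>2 + f*(1-(a+b))\<^sup>2 + 2*\<kappa>*(a+b)*b"
    using assms by (intro add_nonneg_nonneg mult_nonneg_nonneg) auto
  then show ?thesis using eq by linarith
qed

lemma quad_ineq:
  fixes d1 d2 x y :: real
  assumes "d1 > 0" "d2 > 0"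
  shows "0 \<le> (((d1 + d2)\<^sup>2 / (d1 * d2) + 1) * d1 - min d1 (d2/2)) * (x * x) + d1 * (y * x) + d2 * (x * y)
            + (d2 - min d1 (d2/2)) * (y * y)"
proof -
  define \<alpha> where "\<alpha> = (d1 + d2)\<^sup>2 / (d1 * d2)"
  define c where "c = min d1 (d2/2)"
  have "d2 * (\<alpha> * d1 * (x*x) + (d1 + d2) * (x*y) + d2/2 * (y*y)) = ((d1+d2)*x + d2/2*y)\<^sup>2 + (d2/2*y)\<^sup>2"
    unfolding \<alpha>_def using assms by (simp add: field_simps power2_eq_square)
  also have "\<dots> \<ge> 0" by simp
  finally have "0 \<le> \<alpha> * d1 * (x*x) + (d1 + d2) * (x*y) + d2/2 * (y*y)"
    using assms(2) by (simp add: zero_le_mult_iff)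
  moreover have "((\<alpha> + 1) * d1 - c) * (x*x) \<ge> \<alpha> * d1 * (x*x)"
    by (rule mult_right_mono) (auto simp: c_def algebra_simps)
  moreover have "(d2 - c) * (y*y) \<ge> d2/2 * (y*y)"
    by (rule mult_right_mono) (auto simp: c_def)
  ultimately show ?thesis unfolding \<alpha>_def[symmetric] c_def[symmetric] by (simp add: algebra_simps)
qed

lemma step2:
  fixes \<phi> :: "real^'n \<Rightarrow> real" and a b a' b' :: "real^'n \<Rightarrow> real"
  assumes \<Omega>: "\<Omega> \<in> sets lebesgue" "emeasure lebesgue \<Omega> < \<infinity>"
    and cont: "continuous_on UNIV \<phi>"
    and k: "(\<lambda>p. kernel \<phi> j (fst p) (snd p)) \<in> borel_measurable (lebesgue \<Otimes>\<^sub>M lebesgue)"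
      "\<And>x y. \<bar>kernel \<phi> j x y\<bar> \<le> Kb" "\<And>x y. kernel \<phi> j x y = kernel \<phi> j y x"
      "\<And>x y. kernel \<phi> j x y \<ge> 0"
    and pos: "d1 > 0" "d2 > 0" "f > 0" "\<kappa> > 0"
    and L: "a \<in> Linf \<Omega>" "b \<in> Linf \<Omega>" "a' \<in> Linf \<Omega>" "b' \<in> Linf \<Omega>"
    and nn: "AE x\<in>\<Omega> in lebesgue. a x \<ge> 0 \<and> b x \<ge> 0"
    and pa: "AE x\<in>\<Omega> in lebesgue. a' x = d1 * Gamma \<Omega> \<phi> j a x - a x * (b x)\<^sup>2 + f * (1 - a x)"
    and pb: "AE x\<in>\<Omega> in lebesgue. b' x = d2 * Gamma \<Omega> \<phi> j b x + a x * (b x)\<^sup>2 - (f + \<kappa>) * b x"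
    and \<alpha>: "\<alpha> = (d1 + d2)\<^sup>2 / (d1 * d2)"
  shows "\<exists>D \<ge> 0. Yfun \<Omega> \<phi> j a + Yfun \<Omega> \<phi> j b + L2sq \<Omega> (\<lambda>x. a x * b x) \<le> ennreal D \<and>
     (\<integral>x. 2*\<alpha>*a x*a' x + 2*(a x + b x)*(a' x + b' x) \<partial>lebesgue_on \<Omega>)
       \<le> - (min (min d1 (d2/2)) (2*\<alpha>)) * D - f * (\<integral>x. \<alpha>*(a x)\<^sup>2 + (a x + b x)\<^sup>2 \<partial>lebesgue_on \<Omega>)
          + (\<alpha>+1)*f*measure lebesgue \<Omega>"
proof -
  let ?L = "lebesgue :: (real^'n) measure"
  let ?M = "lebesgue_on \<Omega>"
  let ?k = "kernel \<phi> j"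
  define \<mu> where "\<mu> = measure lebesgue \<Omega>"
  define c where "c = min d1 (d2/2)"
  define c0 where "c0 = min c (2*\<alpha>)"
  have \<alpha>0: "\<alpha> > 0" unfolding \<alpha> using pos by (simp add: add_pos_pos)
  have c0: "c > 0" "c0 > 0" "c0 \<le> c" "c0 \<le> 2*\<alpha>" unfolding c0_def c_def using pos \<alpha>0 by auto
  interpret FM: finite_measure ?M by (rule fm_on[OF \<Omega>])
  have \<Omega>L[measurable]: "\<Omega> \<in> sets ?L" using \<Omega> by simp
  have [measurable]: "a \<in> borel_measurable ?M" "b \<in> borel_measurable ?M" "a' \<in> borel_measurable ?M"
      "b' \<in> borel_measurable ?M" using L by (auto simp: Linf_meas)
  obtain Ba where Ba: "Ba \<ge> 0" "AE x in ?M. \<bar>a x\<bar> \<le> Ba" using Linf_ex[OF L(1)] by blast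
  obtain Bb where Bb: "Bb \<ge> 0" "AE x in ?M. \<bar>b x\<bar> \<le> Bb" using Linf_ex[OF L(2)] by blast
  define B where "B = Ba + Bb"
  have B0: "B \<ge> 0" using Ba Bb by (simp add: B_def)
  have aB: "AE x in ?M. \<bar>a x\<bar> \<le> B" using Ba(2) by eventually_elim (use Bb in \<open>auto simp: B_def\<close>)
  have bB: "AE x in ?M. \<bar>b x\<bar> \<le> B" using Bb(2) by eventually_elim (use Ba in \<open>auto simp: B_def\<close>)
  define aT where "aT = trunc \<Omega> B a"
  define bT where "bT = trunc \<Omega> B b"
  have atm[measurable]: "aT \<in> borel_measurable ?L" unfolding aT_def by (rule trunc_meas) (auto simp: \<Omega>)
  have btm[measurable]: "bT \<in> borel_measurable ?L" unfolding bT_def by (rule trunc_meas) (auto simp: \<Omega>)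
  have atM[measurable]: "aT \<in> borel_measurable ?M" "bT \<in> borel_measurable ?M"
    using atm btm by (auto intro: measurable_restrict_space1)
  have atb: "\<bar>aT x\<bar> \<le> B" "\<bar>bT x\<bar> \<le> B" for x unfolding aT_def bT_def using B0 by (auto intro: trunc_bound)
  have aeq: "AE x in ?M. aT x = a x" unfolding aT_def by (rule trunc_AE[OF \<Omega>(1) aB])
  have beq: "AE x in ?M. bT x = b x" unfolding bT_def by (rule trunc_AE[OF \<Omega>(1) bB])
  define Ga where "Ga x = (\<integral>y. ?k x y * (aT y - aT x) \<partial>?M)" for x
  define Gb where "Gb x = (\<integral>y. ?k x y * (bT y - bT x) \<partial>?M)" for x
  have Gam: "Ga \<in> borel_measurable ?L" "Gb \<in> borel_measurable ?L"
    unfolding Ga_def[abs_def] Gb_def[abs_def] by (rule Gamma_meas[OF \<Omega>(1) k(1)]; simp)+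
  have GaM[measurable]: "Ga \<in> borel_measurable ?M" "Gb \<in> borel_measurable ?M"
    using Gam by (auto intro: measurable_restrict_space1)
  have GaE: "AE x in ?M. Gamma \<Omega> \<phi> j a x = Ga x"
    using aeq
  proof eventually_elim
    case (elim x)
    have "Gamma \<Omega> \<phi> j a x = Gamma \<Omega> \<phi> j aT x"
      by (rule Gamma_cong[OF \<Omega>(1) cont]) (use aeq elim in \<open>auto elim: eventually_mono\<close>)
    then show ?case unfolding Ga_def Gamma_on[OF \<Omega>(1)] .
  qed
  have GbE: "AE x in ?M. Gamma \<Omega> \<phi> j b x = Gb x"
    using beq
  proof eventually_elim
    case (elim x)
    have "Gamma \<Omega> \<phi> j b x = Gamma \<Omega> \<phi> j bT x"
      by (rule Gamma_cong[OF \<Omega>(1) cont]) (use beq elim in \<open>auto elim: eventually_mono\<close>)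
    then show ?case unfolding Gb_def Gamma_on[OF \<Omega>(1)] .
  qed
  have paM: "AE x in ?M. a' x = d1 * Gamma \<Omega> \<phi> j a x - a x * (b x)\<^sup>2 + f * (1 - a x)"
    using pa \<Omega>(1) by (simp add: AE_restrict_space_iff)
  have pbM: "AE x in ?M. b' x = d2 * Gamma \<Omega> \<phi> j b x + a x * (b x)\<^sup>2 - (f + \<kappa>) * b x"
    using pb \<Omega>(1) by (simp add: AE_restrict_space_iff)
  have nnM: "AE x in ?M. a x \<ge> 0 \<and> b x \<ge> 0"
    using nn \<Omega>(1) by (subst AE_restrict_space_iff) auto
  define Diff where "Diff x = (2*\<alpha>+2)*d1*(aT x * Ga x) + 2*d1*(bT x * Ga x) + 2*d2*(aT x * Gb x) + 2*d2*(bT x * Gb x)" for x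
  define React where "React x = 2*\<alpha>*aT x*(-aT x*(bT x)\<^sup>2 + f*(1-aT x)) + 2*(aT x+bT x)*(f*(1-aT x) - (f+\<kappa>)*bT x)" for x

  have Dm[measurable]: "Diff \<in> borel_measurable ?M" unfolding Diff_def[abs_def] by measurable
  have Rm[measurable]: "React \<in> borel_measurable ?M" unfolding React_def[abs_def] by measurable
  have lhs_eq: "(\<integral>x. 2*\<alpha>*a x*a' x + 2*(a x + b x)*(a' x + b' x) \<partial>?M) = (\<integral>x. Diff x + React x \<partial>?M)"
  proof (rule integral_cong_AE)
    show "(\<lambda>x. 2*\<alpha>*a x*a' x + 2*(a x + b x)*(a' x + b' x)) \<in> borel_measurable ?M" by measurable
    show "(\<lambda>x. Diff x + React x) \<in> borel_measurable ?M" by measurable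
    show "AE x in ?M. 2*\<alpha>*a x*a' x + 2*(a x + b x)*(a' x + b' x) = Diff x + React x"
      using aeq beq GaE GbE paM pbM
    proof eventually_elim
      case (elim x)
      have A: "a' x = d1 * Ga x - a x * (b x)\<^sup>2 + f * (1 - a x)" using elim(3,5) by simp
      have B: "b' x = d2 * Gb x + a x * (b x)\<^sup>2 - (f + \<kappa>) * b x" using elim(4,6) by simp
      show ?case unfolding Diff_def React_def A B elim(1,2) by (simp add: algebra_simps power2_eq_square)
    qed
  qed
  have iGaa: "integrable ?M (\<lambda>x. aT x * Ga x)" unfolding Ga_def
    by (rule gamma_identity(1)[OF \<Omega> k(1) k(2) k(3) atm atb(1) atm atb(1)])
  have iGba: "integrable ?M (\<lambda>x. bT x * Ga x)" unfolding Ga_def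
    by (rule gamma_identity(1)[OF \<Omega> k(1) k(2) k(3) btm atb(2) atm atb(1)])
  have iGab: "integrable ?M (\<lambda>x. aT x * Gb x)" unfolding Gb_def
    by (rule gamma_identity(1)[OF \<Omega> k(1) k(2) k(3) atm atb(1) btm atb(2)])
  have iGbb: "integrable ?M (\<lambda>x. bT x * Gb x)" unfolding Gb_def
    by (rule gamma_identity(1)[OF \<Omega> k(1) k(2) k(3) btm atb(2) btm atb(2)])
  have vGaa: "(\<integral>x. aT x * Ga x \<partial>?M) = -(1/2) * Pform \<Omega> ?k aT aT" unfolding Ga_def Pform_def
    by (rule gamma_identity(2)[OF \<Omega> k(1) k(2) k(3) atm atb(1) atm atb(1)])
  have vGba: "(\<integral>x. bT x * Ga x \<partial>?M) = -(1/2) * Pform \<Omega> ?k bT aT" unfolding Ga_def Pform_def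
    by (rule gamma_identity(2)[OF \<Omega> k(1) k(2) k(3) btm atb(2) atm atb(1)])
  have vGab: "(\<integral>x. aT x * Gb x \<partial>?M) = -(1/2) * Pform \<Omega> ?k aT bT" unfolding Gb_def Pform_def
    by (rule gamma_identity(2)[OF \<Omega> k(1) k(2) k(3) atm atb(1) btm atb(2)])
  have vGbb: "(\<integral>x. bT x * Gb x \<partial>?M) = -(1/2) * Pform \<Omega> ?k bT bT" unfolding Gb_def Pform_def
    by (rule gamma_identity(2)[OF \<Omega> k(1) k(2) k(3) btm atb(2) btm atb(2)])
  define Paa where "Paa = Pform \<Omega> ?k aT aT"
  define Pba where "Pba = Pform \<Omega> ?k bT aT"
  define Pab where "Pab = Pform \<Omega> ?k aT bT"
  define Pbb where "Pbb = Pform \<Omega> ?k bT bT"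
  have hD: "has_bochner_integral ?M Diff ((2*\<alpha>+2)*d1*(\<integral>x. aT x * Ga x \<partial>?M) + 2*d1*(\<integral>x. bT x * Ga x \<partial>?M)
      + 2*d2*(\<integral>x. aT x * Gb x \<partial>?M) + 2*d2*(\<integral>x. bT x * Gb x \<partial>?M))"
    unfolding Diff_def[abs_def]
    by (intro has_bochner_integral_add has_bochner_integral_mult_right has_bochner_integral_integrable iGaa iGba iGab iGbb)
  have iD: "integrable ?M Diff" using hD by (rule integrable.intros)
  have vD: "(\<integral>x. Diff x \<partial>?M) = -((\<alpha>+1)*d1*Paa + d1*Pba + d2*Pab + d2*Pbb)"
    using has_bochner_integral_integral_eq[OF hD] unfolding vGaa vGba vGab vGbb Paa_def Pba_def Pab_def Pbb_def
    by (simp add: algebra_simps)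
  define q where "q g z p = indicator (\<Omega> \<times> \<Omega>) p * (?k (fst p) (snd p) * ((g (fst p) - g (snd p)) * (z (fst p) - z (snd p))))"
    for g z :: "real^'n \<Rightarrow> real" and p
  have iq: "integrable (?L \<Otimes>\<^sub>M ?L) (q g z)" if "g \<in> borel_measurable ?L" "\<And>x. \<bar>g x\<bar> \<le> B"
     "z \<in> borel_measurable ?L" "\<And>x. \<bar>z x\<bar> \<le> B" for g z
    unfolding q_def[abs_def] by (rule Pform_integrable[OF \<Omega> k(1) k(2) that])
  have Pq: "Pform \<Omega> ?k g z = integral\<^sup>L (?L \<Otimes>\<^sub>M ?L) (q g z)" for g z unfolding Pform_def q_def[abs_def] ..
  have hP: "has_bochner_integral (?L \<Otimes>\<^sub>M ?L) (\<lambda>p. ((\<alpha>+1)*d1 - c) * q aT aT p + d1 * q bT aT p + d2 * q aT bT p + (d2 - c) * q bT bT p)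
      (((\<alpha>+1)*d1 - c) * Paa + d1 * Pba + d2 * Pab + (d2 - c) * Pbb)"
    unfolding Paa_def Pba_def Pab_def Pbb_def Pq
    by (intro has_bochner_integral_add has_bochner_integral_mult_right has_bochner_integral_integrable iq atm btm atb)
  have Pnn: "0 \<le> ((\<alpha>+1)*d1 - c) * Paa + d1 * Pba + d2 * Pab + (d2 - c) * Pbb"
  proof -
    have "0 \<le> integral\<^sup>L (?L \<Otimes>\<^sub>M ?L) (\<lambda>p. ((\<alpha>+1)*d1 - c) * q aT aT p + d1 * q bT aT p + d2 * q aT bT p + (d2 - c) * q bT bT p)"
    proof (rule Bochner_Integration.integral_nonneg)
      fix p
      define x where "x = aT (fst p) - aT (snd p)"
      define y where "y = bT (fst p) - bT (snd p)"
      have eq: "((\<alpha>+1)*d1 - c) * q aT aT p + d1 * q bT aT p + d2 * q aT bT p + (d2 - c) * q bT bT p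
          = indicator (\<Omega> \<times> \<Omega>) p * ?k (fst p) (snd p) *
            ((((d1 + d2)\<^sup>2 / (d1 * d2) + 1) * d1 - min d1 (d2/2)) * (x * x) + d1 * (y * x) + d2 * (x * y)
            + (d2 - min d1 (d2/2)) * (y * y))"
        unfolding q_def x_def[symmetric] y_def[symmetric] \<alpha> c_def by (simp add: algebra_simps)
      have "0 \<le> indicator (\<Omega> \<times> \<Omega>) p * ?k (fst p) (snd p)" using k(4) by simp
      moreover have "0 \<le> (((d1 + d2)\<^sup>2 / (d1 * d2) + 1) * d1 - min d1 (d2/2)) * (x * x) + d1 * (y * x) + d2 * (x * y)
            + (d2 - min d1 (d2/2)) * (y * y)" by (rule quad_ineq[OF pos(1,2)])
      ultimately show "0 \<le> ((\<alpha>+1)*d1 - c) * q aT aT p + d1 * q bT aT p + d2 * q aT bT p + (d2 - c) * q bT bT p"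
        unfolding eq by simp
    qed
    then show ?thesis using has_bochner_integral_integral_eq[OF hP] by simp
  qed
  have Paa0: "Paa \<ge> 0" unfolding Paa_def Pq by (rule Bochner_Integration.integral_nonneg) (auto simp: q_def k(4))
  have Pbb0: "Pbb \<ge> 0" unfolding Pbb_def Pq by (rule Bochner_Integration.integral_nonneg) (auto simp: q_def k(4))
  have Dle: "(\<integral>x. Diff x \<partial>?M) \<le> - c * (Paa + Pbb)"
  proof -
    have "(\<integral>x. Diff x \<partial>?M) + c * (Paa + Pbb) = - (((\<alpha>+1)*d1 - c) * Paa + d1 * Pba + d2 * Pab + (d2 - c) * Pbb)"
      unfolding vD by (simp add: algebra_simps)
    then show ?thesis using Pnn by linarith
  qed

  have iR: "integrable ?M React"
  proof -
    have "integrable ?M (\<lambda>x. (\<lambda>p1 p2. 2*\<alpha>*p1*(-p1*p2\<^sup>2 + f*(1-p1)) + 2*(p1+p2)*(f*(1-p1) - (f+\<kappa>)*p2)) (aT x) (bT x))"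
      by (rule int_cont2[OF \<Omega> atm atb(1) btm atb(2)]) (intro continuous_intros)
    then show ?thesis by (simp add: React_def[abs_def])
  qed
  have iS1: "integrable ?M (\<lambda>x. (aT x * bT x)\<^sup>2)"
  proof -
    have "integrable ?M (\<lambda>x. (\<lambda>p1 p2. (p1 * p2)\<^sup>2) (aT x) (bT x))"
      by (rule int_cont2[OF \<Omega> atm atb(1) btm atb(2)]) (intro continuous_intros)
    then show ?thesis by simp
  qed
  have iS2: "integrable ?M (\<lambda>x. \<alpha>*(aT x)\<^sup>2 + (aT x + bT x)\<^sup>2)"
  proof -
    have "integrable ?M (\<lambda>x. (\<lambda>p1 p2. \<alpha>*p1\<^sup>2 + (p1 + p2)\<^sup>2) (aT x) (bT x))"
      by (rule int_cont2[OF \<Omega> atm atb(1) btm atb(2)]) (intro continuous_intros)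
    then show ?thesis by simp
  qed
  define X where "X = (\<integral>x. (a x * b x)\<^sup>2 \<partial>?M)"
  define FF where "FF = (\<integral>x. \<alpha>*(a x)\<^sup>2 + (a x + b x)\<^sup>2 \<partial>?M)"
  have eX: "(\<integral>x. (aT x * bT x)\<^sup>2 \<partial>?M) = X" unfolding X_def
    by (rule integral_cong_AE) (use aeq beq in \<open>auto elim: eventually_elim2\<close>)
  have eF: "(\<integral>x. \<alpha>*(aT x)\<^sup>2 + (aT x + bT x)\<^sup>2 \<partial>?M) = FF" unfolding FF_def
    by (rule integral_cong_AE) (use aeq beq in \<open>auto elim: eventually_elim2\<close>)
  define Rr where "Rr x = -2*\<alpha>*(aT x*bT x)\<^sup>2 - f*(\<alpha>*(aT x)\<^sup>2 + (aT x+bT x)\<^sup>2) + (\<alpha>+1)*f" for x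
  have hR: "has_bochner_integral ?M Rr (-2*\<alpha>*(\<integral>x. (aT x * bT x)\<^sup>2 \<partial>?M) - f*(\<integral>x. \<alpha>*(aT x)\<^sup>2 + (aT x + bT x)\<^sup>2 \<partial>?M)
        + (\<integral>x. (\<alpha>+1)*f \<partial>?M))"
    unfolding Rr_def[abs_def]
    by (intro has_bochner_integral_add has_bochner_integral_diff has_bochner_integral_mult_right
        has_bochner_integral_integrable iS1 iS2 FM.integrable_const)
  have iRr: "integrable ?M Rr" using hR by (rule integrable.intros)
  have vRr: "(\<integral>x. Rr x \<partial>?M) = -2*\<alpha>*X - f*FF + (\<alpha>+1)*f*\<mu>"
    using has_bochner_integral_integral_eq[OF hR] unfolding eX eF \<mu>_def
    using \<Omega>(1) by (simp add: space_on measure_on)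
  have RleAE: "AE x in ?M. React x \<le> Rr x"
    using aeq beq nnM
  proof eventually_elim
    case (elim x)
    then have "aT x \<ge> 0" "bT x \<ge> 0" by auto
    from react_ineq[OF _ pos(3) pos(4) this, of \<alpha>] \<alpha>0
    show ?case unfolding React_def Rr_def by simp
  qed
  have Rle: "(\<integral>x. React x \<partial>?M) \<le> -2*\<alpha>*X - f*FF + (\<alpha>+1)*f*\<mu>"
    using integral_mono_AE[OF iR iRr RleAE] vRr by simp
  have X0: "X \<ge> 0" unfolding X_def by (rule Bochner_Integration.integral_nonneg) simp
  have lhs_split: "(\<integral>x. Diff x + React x \<partial>?M) = (\<integral>x. Diff x \<partial>?M) + (\<integral>x. React x \<partial>?M)"
    by (rule Bochner_Integration.integral_add[OF iD iR])
  define D where "D = Paa + Pbb + X"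
  have D0: "D \<ge> 0" unfolding D_def using Paa0 Pbb0 X0 by simp
  have m1: "c0 * (Paa + Pbb) \<le> c * (Paa + Pbb)" by (rule mult_right_mono) (use c0 Paa0 Pbb0 in auto)
  have m2: "c0 * X \<le> 2*\<alpha> * X" by (rule mult_right_mono) (use c0 X0 in auto)
  have main: "(\<integral>x. 2*\<alpha>*a x*a' x + 2*(a x + b x)*(a' x + b' x) \<partial>?M) \<le> - c0 * D - f * FF + (\<alpha>+1)*f*\<mu>"
  proof -
    have "(\<integral>x. 2*\<alpha>*a x*a' x + 2*(a x + b x)*(a' x + b' x) \<partial>?M) \<le> - c * (Paa + Pbb) + (-2*\<alpha>*X - f*FF + (\<alpha>+1)*f*\<mu>)"
      unfolding lhs_eq lhs_split using Dle Rle by linarith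
    also have "\<dots> \<le> - c0 * D - f * FF + (\<alpha>+1)*f*\<mu>"
      using m1 m2 unfolding D_def by (simp add: algebra_simps)
    finally show ?thesis .
  qed
  have ameas: "a \<in> borel_measurable ?M" "b \<in> borel_measurable ?M" by measurable
  have Ya: "Yfun \<Omega> \<phi> j a = ennreal Paa" unfolding Paa_def
    by (rule Yfun_eq[OF \<Omega> k(1) k(2) k(4) ameas(1) atm atb(1)]) (use aeq in \<open>auto elim: eventually_mono\<close>)
  have Yb: "Yfun \<Omega> \<phi> j b = ennreal Pbb" unfolding Pbb_def
    by (rule Yfun_eq[OF \<Omega> k(1) k(2) k(4) ameas(2) btm atb(2)]) (use beq in \<open>auto elim: eventually_mono\<close>)
  have iab: "integrable ?M (\<lambda>x. (a x * b x)\<^sup>2)"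
  proof -
    have "integrable ?M (\<lambda>x. (a x * b x)\<^sup>2) = integrable ?M (\<lambda>x. (aT x * bT x)\<^sup>2)"
      by (rule integrable_cong_AE) (use aeq beq in \<open>auto elim: eventually_elim2\<close>)
    then show ?thesis using iS1 by simp
  qed
  have L2: "L2sq \<Omega> (\<lambda>x. a x * b x) = ennreal X" unfolding X_def by (rule L2sq_eq[OF \<Omega>(1) iab])
  have "Yfun \<Omega> \<phi> j a + Yfun \<Omega> \<phi> j b + L2sq \<Omega> (\<lambda>x. a x * b x) \<le> ennreal D"
    unfolding Ya Yb L2 D_def using Paa0 Pbb0 X0 by (simp add: ennreal_plus)
  then show ?thesis using D0 main unfolding c0_def c_def FF_def \<mu>_def by blast
qed


lemma G_deriv:
  fixes u u' v v' :: "real \<Rightarrow> real^'n \<Rightarrow> real"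
  assumes \<Omega>: "\<Omega> \<in> sets lebesgue" "emeasure lebesgue \<Omega> < \<infinity>"
    and U: "Linf_C1 \<Omega> u u'" and V: "Linf_C1 \<Omega> v v'" and s: "s \<ge> 0"
  defines "P \<equiv> \<lambda>w z s. \<integral>x. w s x * z s x \<partial>lebesgue_on \<Omega>"
  defines "Q \<equiv> \<lambda>w w' z z' s. \<integral>x. w' s x * z s x + w s x * z' s x \<partial>lebesgue_on \<Omega>"
  shows "((\<lambda>s. \<alpha> * P u u s + P u u s + 2 * P u v s + P v v s) has_real_derivative
          (\<alpha> * Q u u' u u' s + Q u u' u u' s + 2 * Q u u' v v' s + Q v v' v v' s)) (at s within {0..})"
  unfolding P_def Q_def
  by (intro DERIV_add DERIV_cmult deriv_prod[OF \<Omega> U U s] deriv_prod[OF \<Omega> U V s] deriv_prod[OF \<Omega> V V s])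

theorem lemma4p1:
  fixes \<Omega> :: "(real^'n) set" and \<phi> :: "real^'n \<Rightarrow> real"
    and d1 d2 f \<kappa> \<alpha> :: real and u0 v0 :: "real^'n \<Rightarrow> real"
  assumes "CARD('n) \<ge> 2"
    and "open \<Omega>" and "connected \<Omega>" and "\<Omega> \<noteq> {}" and "bounded \<Omega>"
    and "0 < \<alpha>" and "\<alpha> < 1" and "C2alpha_boundary \<Omega> \<alpha>"
    and "d1 > 0" and "d2 > 0" and "f > 0" and "\<kappa> > 0"
    and "smooth_fun \<phi>" and "\<And>x. \<phi> x \<ge> 0"
    and "closure {x. \<phi> x \<noteq> 0} \<subseteq> ball 0 1"
    and "\<exists>\<psi>::real \<Rightarrow> real. antimono_on {0..} \<psi> \<and> (\<forall>x. \<phi> x = \<psi> (norm x))"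
    and "u0 \<in> Linf \<Omega>" and "v0 \<in> Linf \<Omega>"
    and "AE x\<in>\<Omega> in lebesgue. u0 x \<ge> 0 \<and> v0 x \<ge> 0"
  shows "\<exists>C1>0. \<forall>j\<ge>1. \<forall>u v. is_solution \<Omega> \<phi> d1 d2 f \<kappa> u0 v0 j u v \<longrightarrow>
           (\<forall>t>0. L2sq \<Omega> (u t) + L2sq \<Omega> (v t) \<le> ennreal C1 \<and>
              (\<integral>\<^sup>+ s\<in>{0..t}. (Yfun \<Omega> \<phi> j (u s) + Yfun \<Omega> \<phi> j (v s)
                                 + L2sq \<Omega> (\<lambda>x. u s x * v s x)) \<partial>lborel)
                \<le> ennreal (C1 * (1 + t)))"
proof -
  note pos = assms(9-12)
  have \<Omega>lm: "\<Omega> \<in> lmeasurable" by (rule lmeasurable_open[OF assms(5) assms(2)])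
  have \<Omega>: "\<Omega> \<in> sets lebesgue" "emeasure lebesgue \<Omega> < \<infinity>"
    using \<Omega>lm by (auto simp: fmeasurable_def)
  let ?M = "lebesgue_on \<Omega>"
  interpret FM: finite_measure ?M by (rule fm_on[OF \<Omega>])
  have cont: "continuous_on UNIV \<phi>" by (rule smooth_cont[OF assms(13)])
  define a where "a = (d1 + d2)\<^sup>2 / (d1 * d2)"
  have a2: "a \<ge> 2"
  proof -
    have "2 * (d1 * d2) \<le> (d1 + d2)\<^sup>2"
      using sum_squares_ge_zero[of d1 d2] by (simp add: power2_eq_square algebra_simps)
    then show ?thesis unfolding a_def using pos by (simp add: field_simps)
  qed
  define c0 where "c0 = min (min d1 (d2/2)) (2*a)"
  have c0: "c0 > 0" unfolding c0_def using pos a2 by auto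
  define \<mu> where "\<mu> = measure lebesgue \<Omega>"
  have \<mu>0: "\<mu> \<ge> 0" unfolding \<mu>_def by simp
  define C0 where "C0 = (a+1)*f*\<mu>"
  have C00: "C0 \<ge> 0" unfolding C0_def using a2 pos \<mu>0 by simp
  define F0 where "F0 = (\<integral>x. a*(u0 x)\<^sup>2 + (u0 x + v0 x)\<^sup>2 \<partial>?M)"
  have F00: "F0 \<ge> 0" unfolding F0_def using a2 by (intro Bochner_Integration.integral_nonneg) simp
  define C1 where "C1 = 2 * max F0 (C0 / f) + (F0 + C0) / c0 + 1"
  have C1: "C1 > 0" unfolding C1_def using F00 C00 c0 pos
    by (intro add_nonneg_pos add_nonneg_nonneg) (auto simp: max_def)
  show ?thesis
  proof (intro exI[of _ C1] conjI[OF C1] allI impI)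
    fix j :: nat and u v :: "real \<Rightarrow> real^'n \<Rightarrow> real" and t :: real
    assume j: "j \<ge> 1" and sol: "is_solution \<Omega> \<phi> d1 d2 f \<kappa> u0 v0 j u v" and t: "t > 0"
    obtain u' v' where U: "Linf_C1 \<Omega> u u'" and V: "Linf_C1 \<Omega> v v'"
      and nn: "\<forall>t\<ge>0. AE x\<in>\<Omega> in lebesgue. u t x \<ge> 0 \<and> v t x \<ge> 0"
      and pu: "\<forall>t\<ge>0. AE x\<in>\<Omega> in lebesgue.
            u' t x = d1 * Gamma \<Omega> \<phi> j (u t) x - u t x * (v t x)^2 + f * (1 - u t x)"
      and pv: "\<forall>t\<ge>0. AE x\<in>\<Omega> in lebesgue.
            v' t x = d2 * Gamma \<Omega> \<phi> j (v t) x + u t x * (v t x)^2 - (f + \<kappa>) * v t x"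
      and init: "AE x\<in>\<Omega> in lebesgue. u 0 x = u0 x \<and> v 0 x = v0 x"
      using sol unfolding is_solution_def by blast
    obtain Kb where Kb: "\<forall>x y. \<bar>kernel \<phi> j x y\<bar> \<le> Kb" using kernel_props(1)[OF assms(13-16)] by blast
    note kp = kernel_props(2-4)[OF assms(13-16), where j=j]
    have Lu: "u s \<in> Linf \<Omega>" "u' s \<in> Linf \<Omega>" "v s \<in> Linf \<Omega>" "v' s \<in> Linf \<Omega>" if "s \<ge> 0" for s
      using U V that by (auto simp: Linf_C1_def)
    define P where "P w z s = (\<integral>x. w s x * z s x \<partial>?M)" for w z :: "real \<Rightarrow> real^'n \<Rightarrow> real" and s :: real
    define Q where "Q w w' z z' s = (\<integral>x. w' s x * z s x + w s x * z' s x \<partial>?M)"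
      for w w' z z' :: "real \<Rightarrow> real^'n \<Rightarrow> real" and s :: real
    define G where "G s = a * P u u s + P u u s + 2 * P u v s + P v v s" for s
    define G' where "G' s = a * Q u u' u u' s + Q u u' u u' s + 2 * Q u u' v v' s + Q v v' v v' s" for s
    have Gd: "(G has_real_derivative G' s) (at s within {0..})" if "s \<ge> 0" for s
      unfolding G_def[abs_def] G'_def P_def Q_def by (rule G_deriv[OF \<Omega> U V that])
    have ip: "integrable ?M (\<lambda>x. w x * z x)" if "w \<in> Linf \<Omega>" "z \<in> Linf \<Omega>" for w z
      by (rule int_prod[OF \<Omega> that])
    have Geq: "G s = (\<integral>x. a*(u s x)\<^sup>2 + (u s x + v s x)\<^sup>2 \<partial>?M)" if s: "s \<ge> 0" for s
    proof -
      have h: "has_bochner_integral ?M (\<lambda>x. a * (u s x * u s x) + u s x * u s x + 2 * (u s x * v s x) + v s x * v s x) (G s)"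
        unfolding G_def P_def
        by (intro has_bochner_integral_add has_bochner_integral_mult_right has_bochner_integral_integrable ip Lu[OF s])
      show ?thesis using has_bochner_integral_integral_eq[OF h, symmetric]
        by (simp add: power2_eq_square algebra_simps)
    qed
    have G'eq: "G' s = (\<integral>x. 2*a*u s x*u' s x + 2*(u s x + v s x)*(u' s x + v' s x) \<partial>?M)" if s: "s \<ge> 0" for s
    proof -
      have h: "has_bochner_integral ?M (\<lambda>x. a * (u' s x * u s x + u s x * u' s x) + (u' s x * u s x + u s x * u' s x)
          + 2 * (u' s x * v s x + u s x * v' s x) + (v' s x * v s x + v s x * v' s x)) (G' s)"
        unfolding G'_def Q_def
        by (intro has_bochner_integral_add has_bochner_integral_mult_right has_bochner_integral_integrable
              Bochner_Integration.integrable_add ip Lu[OF s])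
      show ?thesis using has_bochner_integral_integral_eq[OF h, symmetric]
        by (simp add: algebra_simps)
    qed
    have st2: "\<exists>D \<ge> 0. Yfun \<Omega> \<phi> j (u s) + Yfun \<Omega> \<phi> j (v s) + L2sq \<Omega> (\<lambda>x. u s x * v s x) \<le> ennreal D \<and>
        G' s \<le> - c0 * D - f * G s + C0" if s: "s \<ge> 0" for s
      unfolding Geq[OF s] G'eq[OF s] c0_def C0_def \<mu>_def
      by (rule step2[OF \<Omega> cont kp(3) Kb[rule_format] kp(1) kp(2) pos Lu(1)[OF s] Lu(3)[OF s] Lu(2)[OF s] Lu(4)[OF s] nn[rule_format, OF s]
            pu[rule_format, OF s] pv[rule_format, OF s] a_def])
    define Df where "Df s = (SOME D. D \<ge> 0 \<and> Yfun \<Omega> \<phi> j (u s) + Yfun \<Omega> \<phi> j (v s) + L2sq \<Omega> (\<lambda>x. u s x * v s x) \<le> ennreal D \<and>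
        G' s \<le> - c0 * D - f * G s + C0)" for s
    have Dfp: "Df s \<ge> 0 \<and> Yfun \<Omega> \<phi> j (u s) + Yfun \<Omega> \<phi> j (v s) + L2sq \<Omega> (\<lambda>x. u s x * v s x) \<le> ennreal (Df s) \<and>
        G' s \<le> - c0 * Df s - f * G s + C0" if s: "s \<ge> 0" for s
      unfolding Df_def by (rule someI_ex) (use st2[OF s] in blast)
    have Gnn: "G s \<ge> 0" if "s \<ge> 0" for s
      unfolding Geq[OF that] using a2 by (intro Bochner_Integration.integral_nonneg) simp
    have G0: "G 0 = F0"
    proof -
      have "AE x in ?M. u 0 x = u0 x \<and> v 0 x = v0 x" using init \<Omega>(1) by (subst AE_restrict_space_iff) auto
      note ae0 = this
      have m0[measurable]: "u 0 \<in> borel_measurable ?M" "v 0 \<in> borel_measurable ?M"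
          "u0 \<in> borel_measurable ?M" "v0 \<in> borel_measurable ?M"
        using Lu[of 0] assms(17,18) by (auto simp: Linf_meas)
      have "(\<integral>x. a*(u 0 x)\<^sup>2 + (u 0 x + v 0 x)\<^sup>2 \<partial>?M) = F0" unfolding F0_def
      proof (rule integral_cong_AE)
        show "(\<lambda>x. a*(u 0 x)\<^sup>2 + (u 0 x + v 0 x)\<^sup>2) \<in> borel_measurable ?M" by measurable
        show "(\<lambda>x. a*(u0 x)\<^sup>2 + (u0 x + v0 x)\<^sup>2) \<in> borel_measurable ?M" by measurable
        show "AE x in ?M. a*(u 0 x)\<^sup>2 + (u 0 x + v 0 x)\<^sup>2 = a*(u0 x)\<^sup>2 + (u0 x + v0 x)\<^sup>2"
          using ae0 by eventually_elim simp
      qed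
      then show ?thesis using Geq[of 0] by simp
    qed
    have t0: "t \<ge> 0" using t by simp
    have ob1: "G t \<le> max (G 0) (C0 / f)"
      by (rule ode_bound(1)[OF pos(3) c0 Gd Gnn _ _ t0, of Df]) (use Dfp in auto)
    have ob2: "(\<integral>\<^sup>+ s\<in>{0..t}. ennreal (Df s) \<partial>lborel) \<le> ennreal ((G 0 + C0 * t) / c0)"
      by (rule ode_bound(2)[OF pos(3) c0 Gd Gnn _ _ t0]) (use Dfp in auto)
    have L2u: "L2sq \<Omega> (u t) = ennreal (\<integral>x. (u t x)\<^sup>2 \<partial>?M)"
      by (rule L2sq_eq[OF \<Omega>(1)]) (use ip[OF Lu(1)[OF t0] Lu(1)[OF t0]] in \<open>simp add: power2_eq_square\<close>)
    have L2v: "L2sq \<Omega> (v t) = ennreal (\<integral>x. (v t x)\<^sup>2 \<partial>?M)"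
      by (rule L2sq_eq[OF \<Omega>(1)]) (use ip[OF Lu(3)[OF t0] Lu(3)[OF t0]] in \<open>simp add: power2_eq_square\<close>)
    have iu2: "integrable ?M (\<lambda>x. (u t x)\<^sup>2)" using ip[OF Lu(1)[OF t0] Lu(1)[OF t0]] by (simp add: power2_eq_square)
    have iv2: "integrable ?M (\<lambda>x. (v t x)\<^sup>2)" using ip[OF Lu(3)[OF t0] Lu(3)[OF t0]] by (simp add: power2_eq_square)
    have iuv: "integrable ?M (\<lambda>x. u t x * v t x)" using ip[OF Lu(1)[OF t0] Lu(3)[OF t0]] .
    have iG: "integrable ?M (\<lambda>x. a*(u t x)\<^sup>2 + (u t x + v t x)\<^sup>2)"
    proof -
      have "integrable ?M (\<lambda>x. a*(u t x)\<^sup>2 + ((u t x)\<^sup>2 + 2 * (u t x * v t x) + (v t x)\<^sup>2))"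
        by (intro Bochner_Integration.integrable_add integrable_mult_right iu2 iv2 iuv)
      then show ?thesis by (simp add: power2_eq_square algebra_simps)
    qed
    have sq: "(\<integral>x. (u t x)\<^sup>2 \<partial>?M) + (\<integral>x. (v t x)\<^sup>2 \<partial>?M) \<le> 2 * G t"
    proof -
      have "(\<integral>x. (u t x)\<^sup>2 \<partial>?M) + (\<integral>x. (v t x)\<^sup>2 \<partial>?M) = (\<integral>x. (u t x)\<^sup>2 + (v t x)\<^sup>2 \<partial>?M)"
        by (rule Bochner_Integration.integral_add[symmetric, OF iu2 iv2])
      also have "\<dots> \<le> (\<integral>x. 2 * (a*(u t x)\<^sup>2 + (u t x + v t x)\<^sup>2) \<partial>?M)"
      proof (rule integral_mono)
        show "integrable ?M (\<lambda>x. (u t x)\<^sup>2 + (v t x)\<^sup>2)" by (intro Bochner_Integration.integrable_add iu2 iv2)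
        show "integrable ?M (\<lambda>x. 2 * (a*(u t x)\<^sup>2 + (u t x + v t x)\<^sup>2))" by (intro integrable_mult_right iG)
        fix x
        have "0 \<le> (2 * u t x + v t x)\<^sup>2 + (u t x)\<^sup>2 + (2 * a - 4) * (u t x)\<^sup>2"
          using a2 by (intro add_nonneg_nonneg mult_nonneg_nonneg) auto
        then show "(u t x)\<^sup>2 + (v t x)\<^sup>2 \<le> 2 * (a*(u t x)\<^sup>2 + (u t x + v t x)\<^sup>2)"
          by (simp add: algebra_simps power2_eq_square)
      qed
      also have "\<dots> = 2 * G t" by (simp only: integral_mult_right_zero Geq[OF t0])
      finally show ?thesis .
    qed
    have part1: "L2sq \<Omega> (u t) + L2sq \<Omega> (v t) \<le> ennreal C1"
    proof -
      have "L2sq \<Omega> (u t) + L2sq \<Omega> (v t) = ennreal ((\<integral>x. (u t x)\<^sup>2 \<partial>?M) + (\<integral>x. (v t x)\<^sup>2 \<partial>?M))"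
        unfolding L2u L2v by (simp add: ennreal_plus)
      also have "\<dots> \<le> ennreal C1"
      proof (rule ennreal_leI)
        have "2 * G t \<le> 2 * max F0 (C0 / f)" using ob1 G0 by simp
        also have "\<dots> \<le> C1" unfolding C1_def using F00 C00 c0 by (simp add: add_nonneg_nonneg)
        finally show "(\<integral>x. (u t x)\<^sup>2 \<partial>?M) + (\<integral>x. (v t x)\<^sup>2 \<partial>?M) \<le> C1" using sq by linarith
      qed
      finally show ?thesis .
    qed
    have part2: "(\<integral>\<^sup>+ s\<in>{0..t}. (Yfun \<Omega> \<phi> j (u s) + Yfun \<Omega> \<phi> j (v s) + L2sq \<Omega> (\<lambda>x. u s x * v s x)) \<partial>lborel)
        \<le> ennreal (C1 * (1 + t))"
    proof -
      have "(\<integral>\<^sup>+ s\<in>{0..t}. (Yfun \<Omega> \<phi> j (u s) + Yfun \<Omega> \<phi> j (v s) + L2sq \<Omega> (\<lambda>x. u s x * v s x)) \<partial>lborel)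
          \<le> (\<integral>\<^sup>+ s\<in>{0..t}. ennreal (Df s) \<partial>lborel)"
      proof (rule nn_integral_mono)
        fix s
        show "(Yfun \<Omega> \<phi> j (u s) + Yfun \<Omega> \<phi> j (v s) + L2sq \<Omega> (\<lambda>x. u s x * v s x)) * indicator {0..t} s
            \<le> ennreal (Df s) * indicator {0..t} s"
        proof (cases "s \<in> {0..t}")
          case True
          then show ?thesis using Dfp[of s] by auto
        qed simp
      qed
      also have "\<dots> \<le> ennreal ((G 0 + C0 * t) / c0)" by (rule ob2)
      also have "\<dots> \<le> ennreal (C1 * (1 + t))"
      proof (rule ennreal_leI)
        have "(F0 + C0 * t) / c0 \<le> (F0 + C0) / c0 * (1 + t)"
        proof -
          have "F0 + C0 * t \<le> (F0 + C0) * (1 + t)" using F00 C00 t0 by (simp add: algebra_simps)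
          then have "(F0 + C0 * t) / c0 \<le> (F0 + C0) * (1 + t) / c0" using c0 by (intro divide_right_mono) auto
          then show ?thesis by (simp only: times_divide_eq_left)
        qed
        also have "\<dots> \<le> C1 * (1 + t)"
          by (rule mult_right_mono) (use F00 C00 c0 t0 in \<open>auto simp: C1_def\<close>)
        finally show "(G 0 + C0 * t) / c0 \<le> C1 * (1 + t)" unfolding G0 .
      qed
      finally show ?thesis .
    qed
    show "L2sq \<Omega> (u t) + L2sq \<Omega> (v t) \<le> ennreal C1 \<and>
              (\<integral>\<^sup>+ s\<in>{0..t}. (Yfun \<Omega> \<phi> j (u s) + Yfun \<Omega> \<phi> j (v s)
                                 + L2sq \<Omega> (\<lambda>x. u s x * v s x)) \<partial>lborel)
                \<le> ennreal (C1 * (1 + t))" using part1 part2 by blast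
  qed
qed


end
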